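(* Let $n\ge1$, $a>0$, and let $K_a$ be the Kasteleyn matrix of the Aztec diamond of size $n$ with weights $1$ and $a$, i.e. for $x\in\mathtt{B}$, $y\in\mathtt{W}$, $$K_a(x,y)=\begin{cases}1 & x-y=\pm e_1,\\ a\mathrm{i} & x-y=\pm e_2,\\ 0&\text{otherwise.}\end{cases}$$ Let $G_n(\mathtt{w},\mathtt{b})=\sum_{x\in\mathtt{W},\,y\in\mathtt{B}} K_a^{-1}(x,y)\,w_1^{x_1}w_2^{x_2}b_1^{y_1}b_2^{y_2}$. Then $$\begin{aligned}G_n(\mathtt{w},\mathtt{b})=&\ \frac{w_1w_2^2b_2\,f_{n+1}(w_1^2b_1^2)\,f_n(w_2^2b_2^2)}{C(w_1,w_2)}\\ &+(1+\mathrm{i}aw_1^2)\frac{(1+\mathrm{i}ab_2^2)F^{0,0}_n+b_1^2\big(b_2w_1f_n(b_1^2w_1^2)+(\mathrm{i}a+b_2^2)F^{0,1}_n\big)}{C(w_1,w_2)C(b_1,b_2)}\\ &+(\mathrm{i}a+w_1^2)w_2^2\frac{b_1^2b_2^{2n+1}w_1w_2^{2n}f_n(b_1^2w_1^2)+(1+\mathrm{i}ab_2^2)F^{1,0}_n+b_1^2(\mathrm{i}a+b_2^2)F^{1,1}_n}{C(w_1,w_2)C(b_1,b_2)},\end{aligned}$$ where $C(r_1,r_2)=1+r_1^2r_2^2+\mathrm{i}a(r_1^2+r_2^2)$ and $F^{k,l}_n=F^{k,l}_n(\mathtt{w},\mathtt{b},a)$ are as in the context.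
   Context: $\mathrm{i}=\sqrt{-1}$. Aztec diamond of size $n$: white vertices $\mathtt{W}=\{(x_1,x_2): x_1\text{ odd},\ x_2\text{ even},\ 1\le x_1\le 2n-1,\ 0\le x_2\le 2n\}$, black vertices $\mathtt{B}=\{(x_1,x_2): x_1\text{ even},\ x_2\text{ odd},\ 0\le x_1\le 2n,\ 1\le x_2\le 2n-1\}$, $e_1=(1,1)$, $e_2=(-1,1)$. $K_a$ has rows indexed by $\mathtt{B}$ and columns by $\mathtt{W}$; $K_a^{-1}$ is indexed by $\mathtt{W}\times\mathtt{B}$. $f_n(t)=(1-t^n)/(1-t)$. Define $F_n(w,b,a)=-\frac{\mathrm{i}\,a}{1+a^2}\,f_n\!\left(\frac{(1+ba\mathrm{i})(1+wa\mathrm{i})}{1+a^2}\right)$ and $F^{0,0}_n(\mathtt{w},\mathtt{b},a)=F_n(w_1^2,b_2^2,a)w_1b_2$, $F^{0,1}_n(\mathtt{w},\mathtt{b},a)=F_n(-1/w_1^2,-b_2^2,a^{-1})w_1^{2n-1}b_1^{2n}b_2\mathrm{i}/a$, $F^{1,0}_n(\mathtt{w},\mathtt{b},a)=F_n(-w_1^2,-1/b_2^2,a^{-1})w_1w_2^{2n}b_2^{2n-1}\mathrm{i}/a$, $F^{1,1}_n(\mathtt{w},\mathtt{b},a)=F_n(1/w_1^2,1/b_2^2,a)w_1^{2n-1}w_2^{2n}b_1^{2n}b_2^{2n-1}$. *)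

theory Defs
  imports Complex_Main
begin

definition aztec_W :: "nat \<Rightarrow> (int \<times> int) set" where
  "aztec_W n = {(x1, x2). odd x1 \<and> even x2 \<and> 1 \<le> x1 \<and> x1 \<le> 2 * int n - 1
                          \<and> 0 \<le> x2 \<and> x2 \<le> 2 * int n}"

definition aztec_B :: "nat \<Rightarrow> (int \<times> int) set" where
  "aztec_B n = {(x1, x2). even x1 \<and> odd x2 \<and> 0 \<le> x1 \<and> x1 \<le> 2 * int n
                          \<and> 1 \<le> x2 \<and> x2 \<le> 2 * int n - 1}"

text \<open>Kasteleyn matrix entry K_a(x,y), x black, y white; e1 = (1,1), e2 = (-1,1).\<close>
definition kast :: "real \<Rightarrow> int \<times> int \<Rightarrow> int \<times> int \<Rightarrow> complex" where
  "kast a x y =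
     (let d = (fst x - fst y, snd x - snd y) in
      if d = (1, 1) \<or> d = (-1, -1) then 1
      else if d = (-1, 1) \<or> d = (1, -1) then complex_of_real a * \<i>
      else 0)"

definition is_kast_inverse :: "nat \<Rightarrow> real \<Rightarrow> (int \<times> int \<Rightarrow> int \<times> int \<Rightarrow> complex) \<Rightarrow> bool" where
  "is_kast_inverse n a Kinv \<longleftrightarrow>
     (\<forall>x\<in>aztec_B n. \<forall>z\<in>aztec_B n.
        (\<Sum>y\<in>aztec_W n. kast a x y * Kinv y z) = (if x = z then 1 else 0)) \<and>
     (\<forall>x\<in>aztec_W n. \<forall>z\<in>aztec_W n.
        (\<Sum>y\<in>aztec_B n. Kinv x y * kast a y z) = (if x = z then 1 else 0))"

definition gen_G :: "nat \<Rightarrow> (int \<times> int \<Rightarrow> int \<times> int \<Rightarrow> complex) \<Rightarrow>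
                     complex \<Rightarrow> complex \<Rightarrow> complex \<Rightarrow> complex \<Rightarrow> complex" where
  "gen_G n Kinv w1 w2 b1 b2 =
     (\<Sum>x\<in>aztec_W n. \<Sum>y\<in>aztec_B n.
        Kinv x y * w1 ^ nat (fst x) * w2 ^ nat (snd x) * b1 ^ nat (fst y) * b2 ^ nat (snd y))"

text \<open>f_n(t) = (1 - t^n)/(1 - t), extended by its polynomial value n at t = 1.\<close>
definition fpoly :: "nat \<Rightarrow> complex \<Rightarrow> complex" where
  "fpoly n t = (if t = 1 then of_nat n else (1 - t ^ n) / (1 - t))"

definition Fn :: "nat \<Rightarrow> complex \<Rightarrow> complex \<Rightarrow> complex \<Rightarrow> complex" where
  "Fn n w b a = - (\<i> * a) / (1 + a\<^sup>2) * fpoly n ((1 + b * a * \<i>) * (1 + w * a * \<i>) / (1 + a\<^sup>2))"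

definition F00 :: "nat \<Rightarrow> complex \<Rightarrow> complex \<Rightarrow> complex \<Rightarrow> complex \<Rightarrow> complex \<Rightarrow> complex" where
  "F00 n w1 w2 b1 b2 a = Fn n (w1\<^sup>2) (b2\<^sup>2) a * w1 * b2"

definition F01 :: "nat \<Rightarrow> complex \<Rightarrow> complex \<Rightarrow> complex \<Rightarrow> complex \<Rightarrow> complex \<Rightarrow> complex" where
  "F01 n w1 w2 b1 b2 a = Fn n (- 1 / w1\<^sup>2) (- b2\<^sup>2) (1 / a)
      * w1 ^ (2 * n - 1) * b1 ^ (2 * n) * b2 * \<i> / a"

definition F10 :: "nat \<Rightarrow> complex \<Rightarrow> complex \<Rightarrow> complex \<Rightarrow> complex \<Rightarrow> complex \<Rightarrow> complex" where
  "F10 n w1 w2 b1 b2 a = Fn n (- w1\<^sup>2) (- 1 / b2\<^sup>2) (1 / a)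
      * w1 * w2 ^ (2 * n) * b2 ^ (2 * n - 1) * \<i> / a"

definition F11 :: "nat \<Rightarrow> complex \<Rightarrow> complex \<Rightarrow> complex \<Rightarrow> complex \<Rightarrow> complex \<Rightarrow> complex" where
  "F11 n w1 w2 b1 b2 a = Fn n (1 / w1\<^sup>2) (1 / b2\<^sup>2) a
      * w1 ^ (2 * n - 1) * w2 ^ (2 * n) * b1 ^ (2 * n) * b2 ^ (2 * n - 1)"

definition Cden :: "complex \<Rightarrow> complex \<Rightarrow> complex \<Rightarrow> complex" where
  "Cden a r1 r2 = 1 + r1\<^sup>2 * r2\<^sup>2 + \<i> * a * (r1\<^sup>2 + r2\<^sup>2)"

end

theory Submission
  imports Defs "HOL-Computational_Algebra.Polynomial"
begin

definition wv :: "nat \<Rightarrow> nat \<Rightarrow> int \<times> int" where "wv i j = (2 * int i + 1, 2 * int j)"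
definition bv :: "nat \<Rightarrow> nat \<Rightarrow> int \<times> int" where "bv k l = (2 * int k, 2 * int l + 1)"

lemma W_eq: "aztec_W n = (\<lambda>(i,j). wv i j) ` ({..<n} \<times> {..n})"
proof (rule set_eqI, rule iffI)
  fix x assume "x \<in> aztec_W n"
  then obtain x1 x2 where x: "x = (x1,x2)" "odd x1" "even x2" "1 \<le> x1" "x1 \<le> 2 * int n - 1" "0 \<le> x2" "x2 \<le> 2 * int n"
    by (auto simp: aztec_W_def)
  obtain m where m: "x1 = 2*m+1" using x(2) oddE by blast
  obtain p where p: "x2 = 2*p" using x(3) by blast
  have "x = wv (nat m) (nat p)" "nat m < n" "nat p \<le> n" using x m p by (auto simp: wv_def)
  then show "x \<in> (\<lambda>(i,j). wv i j) ` ({..<n} \<times> {..n})" by force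
next
  fix x assume "x \<in> (\<lambda>(i,j). wv i j) ` ({..<n} \<times> {..n})"
  then show "x \<in> aztec_W n" by (auto simp: aztec_W_def wv_def)
qed

lemma B_eq: "aztec_B n = (\<lambda>(k,l). bv k l) ` ({..n} \<times> {..<n})"
proof (rule set_eqI, rule iffI)
  fix x assume "x \<in> aztec_B n"
  then obtain x1 x2 where x: "x = (x1,x2)" "even x1" "odd x2" "0 \<le> x1" "x1 \<le> 2 * int n" "1 \<le> x2" "x2 \<le> 2 * int n - 1"
    by (auto simp: aztec_B_def)
  obtain m where m: "x2 = 2*m+1" using x(3) oddE by blast
  obtain p where p: "x1 = 2*p" using x(2) by blast
  have "x = bv (nat p) (nat m)" "nat m < n" "nat p \<le> n" using x m p by (auto simp: bv_def)
  then show "x \<in> (\<lambda>(k,l). bv k l) ` ({..n} \<times> {..<n})" by force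
next
  fix x assume "x \<in> (\<lambda>(k,l). bv k l) ` ({..n} \<times> {..<n})"
  then show "x \<in> aztec_B n" by (auto simp: aztec_B_def bv_def)
qed

lemma inj_wv: "inj_on (\<lambda>(i,j). wv i j) A" by (auto simp: inj_on_def wv_def)
lemma inj_bv: "inj_on (\<lambda>(i,j). bv i j) A" by (auto simp: inj_on_def bv_def)

lemma sumW: "(\<Sum>x\<in>aztec_W n. f x) = (\<Sum>i<n. \<Sum>j\<le>n. f (wv i j))"
proof -
  have "(\<Sum>x\<in>aztec_W n. f x) = (\<Sum>p\<in>{..<n} \<times> {..n}. f ((\<lambda>(i,j). wv i j) p))"
    unfolding W_eq by (rule sum.reindex[OF inj_wv, unfolded comp_def])
  also have "\<dots> = (\<Sum>(i,j)\<in>{..<n} \<times> {..n}. f (wv i j))" by (simp add: split_def)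
  also have "\<dots> = (\<Sum>i<n. \<Sum>j\<le>n. f (wv i j))" by (rule sum.cartesian_product[symmetric])
  finally show ?thesis .
qed

lemma sumB: "(\<Sum>x\<in>aztec_B n. f x) = (\<Sum>k\<le>n. \<Sum>l<n. f (bv k l))"
proof -
  have "(\<Sum>x\<in>aztec_B n. f x) = (\<Sum>p\<in>{..n} \<times> {..<n}. f ((\<lambda>(i,j). bv i j) p))"
    unfolding B_eq by (rule sum.reindex[OF inj_bv, unfolded comp_def])
  also have "\<dots> = (\<Sum>(k,l)\<in>{..n} \<times> {..<n}. f (bv k l))" by (simp add: split_def)
  also have "\<dots> = (\<Sum>k\<le>n. \<Sum>l<n. f (bv k l))" by (rule sum.cartesian_product[symmetric])
  finally show ?thesis .
qed

lemma kast_bw: "kast a (bv k l) (wv i j) =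
   (if k = i+1 \<and> l = j then 1 else 0) + (if k = i \<and> l+1 = j then 1 else 0)
 + (if k = i \<and> l = j then complex_of_real a * \<i> else 0) + (if k = i+1 \<and> l+1 = j then complex_of_real a * \<i> else 0)"
  unfolding kast_def bv_def wv_def Let_def by auto

lemma if0_mult: "(if P then c else 0) * (x::complex) = (if P then c * x else 0)" by simp

lemma dsum1: fixes T :: "nat \<Rightarrow> nat \<Rightarrow> complex" shows "(\<Sum>k\<le>n. \<Sum>l<m. (if k = A \<and> l = B then c else 0) * T k l) = (if A \<le> n \<and> B < m then c * T A B else 0)"
proof -
  have "(\<Sum>k\<le>n. \<Sum>l<m. (if k = A \<and> l = B then c else 0) * T k l) = (\<Sum>k\<le>n. if k = A then (\<Sum>l<m. if l = B then c * T k l else 0) else 0)"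
    by (intro sum.cong refl) (auto simp: sum.delta' if0_mult)
  also have "\<dots> = (if A \<le> n \<and> B < m then c * T A B else 0)"
    by (simp add: sum.delta')
  finally show ?thesis .
qed

lemma dsum2: fixes T :: "nat \<Rightarrow> nat \<Rightarrow> complex" shows "(\<Sum>k\<le>n. \<Sum>l<m. (if k = A \<and> l + 1 = J then c else 0) * T k l) = (if A \<le> n \<and> 1 \<le> J \<and> J \<le> m then c * T A (J - 1) else 0)"
proof -
  have "(\<Sum>k\<le>n. \<Sum>l<m. (if k = A \<and> l + 1 = J then c else 0) * T k l) = (\<Sum>k\<le>n. \<Sum>l<m. (if k = A \<and> l = J - 1 then (if 1 \<le> J then c else 0) else 0) * T k l)"
    by (auto intro!: sum.cong)
  also have "\<dots> = (if A \<le> n \<and> 1 \<le> J \<and> J \<le> m then c * T A (J - 1) else 0)"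
    by (subst dsum1) auto
  finally show ?thesis .
qed

lemma dsum3: fixes S :: "nat \<Rightarrow> nat \<Rightarrow> complex" shows "(\<Sum>i<n. \<Sum>j\<le>m. (if A = i \<and> B = j then c else 0) * S i j) = (if A < n \<and> B \<le> m then c * S A B else 0)"
proof -
  have "(\<Sum>i<n. \<Sum>j\<le>m. (if A = i \<and> B = j then c else 0) * S i j) = (\<Sum>i<n. if i = A then (\<Sum>j\<le>m. if j = B then c * S i j else 0) else 0)"
    by (intro sum.cong refl) (auto simp: sum.delta' if0_mult)
  also have "\<dots> = (if A < n \<and> B \<le> m then c * S A B else 0)"
    by (simp add: sum.delta')
  finally show ?thesis .
qed

lemma dsum4: fixes S :: "nat \<Rightarrow> nat \<Rightarrow> complex" shows "(\<Sum>i<n. \<Sum>j\<le>m. (if i = A \<and> j = B then c else 0) * S i j) = (if A < n \<and> B \<le> m then c * S A B else 0)"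
  by (subst dsum3[symmetric]) (auto intro!: sum.cong)

lemma KT_inner:
  assumes "i < n" "j \<le> n"
  shows "(\<Sum>k\<le>n. \<Sum>l<n. kast a (bv k l) (wv i j) * T k l) =
     (if j < n then T (i+1) j else 0) + (if 1 \<le> j then T i (j - 1) else 0)
   + complex_of_real a * \<i> * (if j < n then T i j else 0)
   + complex_of_real a * \<i> * (if 1 \<le> j then T (i+1) (j - 1) else 0)"
  using assms
  by (simp add: kast_bw distrib_right sum.distrib dsum1 dsum2 del: One_nat_def)

lemma KS_inner:
  assumes "k \<le> n" "l < n"
  shows "(\<Sum>i<n. \<Sum>j\<le>n. kast a (bv k l) (wv i j) * S i j) =
     (if 1 \<le> k then S (k - 1) l else 0) + (if k < n then S k (l+1) else 0)
   + complex_of_real a * \<i> * (if k < n then S k l else 0)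
   + complex_of_real a * \<i> * (if 1 \<le> k then S (k - 1) (l+1) else 0)"
proof -
  have e: "kast a (bv k l) (wv i j) =
   (if k - 1 = i \<and> l = j then (if 1 \<le> k then 1 else 0) else 0) + (if k = i \<and> l+1 = j then 1 else 0)
 + (if k = i \<and> l = j then complex_of_real a * \<i> else 0) + (if k - 1 = i \<and> l+1 = j then (if 1 \<le> k then complex_of_real a * \<i> else 0) else 0)" for i j
    unfolding kast_bw by auto
  show ?thesis using assms
    by (simp add: e distrib_right sum.distrib dsum3 del: One_nat_def) auto
qed

lemma swap4: "(\<Sum>k\<in>A. \<Sum>l\<in>B. \<Sum>i\<in>C. \<Sum>j\<in>D. f k l i j) = (\<Sum>i\<in>C. \<Sum>j\<in>D. \<Sum>k\<in>A. \<Sum>l\<in>B. f k l i j)"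
proof -
  have "(\<Sum>k\<in>A. \<Sum>l\<in>B. \<Sum>i\<in>C. \<Sum>j\<in>D. f k l i j) = (\<Sum>k\<in>A. \<Sum>i\<in>C. \<Sum>l\<in>B. \<Sum>j\<in>D. f k l i j)"
    by (rule sum.cong[OF refl], rule sum.swap)
  also have "\<dots> = (\<Sum>k\<in>A. \<Sum>i\<in>C. \<Sum>j\<in>D. \<Sum>l\<in>B. f k l i j)"
    by (rule sum.cong[OF refl], rule sum.cong[OF refl], rule sum.swap)
  also have "\<dots> = (\<Sum>i\<in>C. \<Sum>k\<in>A. \<Sum>j\<in>D. \<Sum>l\<in>B. f k l i j)"
    by (rule sum.swap)
  also have "\<dots> = (\<Sum>i\<in>C. \<Sum>j\<in>D. \<Sum>k\<in>A. \<Sum>l\<in>B. f k l i j)"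
    by (rule sum.cong[OF refl], rule sum.swap)
  finally show ?thesis .
qed

definition KTf :: "real \<Rightarrow> nat \<Rightarrow> (nat \<Rightarrow> nat \<Rightarrow> complex) \<Rightarrow> nat \<Rightarrow> nat \<Rightarrow> complex" where
  "KTf a n T i j = (if j < n then T (i+1) j else 0) + (if 1 \<le> j then T i (j - 1) else 0)
   + complex_of_real a * \<i> * (if j < n then T i j else 0)
   + complex_of_real a * \<i> * (if 1 \<le> j then T (i+1) (j - 1) else 0)"

definition KSf :: "real \<Rightarrow> nat \<Rightarrow> (nat \<Rightarrow> nat \<Rightarrow> complex) \<Rightarrow> nat \<Rightarrow> nat \<Rightarrow> complex" where
  "KSf a n S k l = (if 1 \<le> k then S (k - 1) l else 0) + (if k < n then S k (l+1) else 0)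
   + complex_of_real a * \<i> * (if k < n then S k l else 0)
   + complex_of_real a * \<i> * (if 1 \<le> k then S (k - 1) (l+1) else 0)"

lemma bv_inj: "bv k l = bv k' l' \<longleftrightarrow> k = k' \<and> l = l'" by (auto simp: bv_def)
lemma wv_inj: "wv k l = wv k' l' \<longleftrightarrow> k = k' \<and> l = l'" by (auto simp: wv_def)

lemma LA:
  assumes inv: "is_kast_inverse n a Kinv" and kl: "k \<le> n" "l < n"
  shows "(\<Sum>i<n. \<Sum>j\<le>n. Kinv (wv i j) (bv k l) * KTf a n T i j) = T k l"
proof -
  have bB: "bv k l \<in> aztec_B n" using kl by (auto simp: B_eq)
  have d: "(\<Sum>i<n. \<Sum>j\<le>n. kast a (bv k' l') (wv i j) * Kinv (wv i j) (bv k l)) = (if k' = k \<and> l' = l then 1 else 0)"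
    if "k' \<le> n" "l' < n" for k' l'
  proof -
    have "bv k' l' \<in> aztec_B n" using that by (auto simp: B_eq)
    with inv bB have "(\<Sum>y\<in>aztec_W n. kast a (bv k' l') y * Kinv y (bv k l)) = (if bv k' l' = bv k l then 1 else 0)"
      unfolding is_kast_inverse_def by blast
    then show ?thesis by (simp add: sumW bv_inj)
  qed
  have "T k l = (\<Sum>k'\<le>n. \<Sum>l'<n. T k' l' * (if k' = k \<and> l' = l then 1 else 0))"
    using kl by (simp add: if0_mult[symmetric] mult.commute[of "T _ _"] dsum1[where c=1, simplified])
  also have "\<dots> = (\<Sum>k'\<le>n. \<Sum>l'<n. \<Sum>i<n. \<Sum>j\<le>n. T k' l' * (kast a (bv k' l') (wv i j) * Kinv (wv i j) (bv k l)))"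
  proof (intro sum.cong refl)
    fix k' l' assume "k' \<in> {..n}" "l' \<in> {..<n}"
    then show "T k' l' * (if k' = k \<and> l' = l then 1 else 0) = (\<Sum>i<n. \<Sum>j\<le>n. T k' l' * (kast a (bv k' l') (wv i j) * Kinv (wv i j) (bv k l)))"
      by (simp add: d sum_distrib_left[symmetric])
  qed
  also have "\<dots> = (\<Sum>i<n. \<Sum>j\<le>n. \<Sum>k'\<le>n. \<Sum>l'<n. T k' l' * (kast a (bv k' l') (wv i j) * Kinv (wv i j) (bv k l)))"
    by (rule swap4)
  also have "\<dots> = (\<Sum>i<n. \<Sum>j\<le>n. Kinv (wv i j) (bv k l) * KTf a n T i j)"
  proof (intro sum.cong refl)
    fix i j assume "i \<in> {..<n}" "j \<in> {..n}"
    then have "KTf a n T i j = (\<Sum>k\<le>n. \<Sum>l<n. kast a (bv k l) (wv i j) * T k l)"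
      unfolding KTf_def by (subst KT_inner) auto
    then show "(\<Sum>k'\<le>n. \<Sum>l'<n. T k' l' * (kast a (bv k' l') (wv i j) * Kinv (wv i j) (bv k l))) = Kinv (wv i j) (bv k l) * KTf a n T i j"
      by (simp add: sum_distrib_left mult_ac)
  qed
  finally show ?thesis by simp
qed

lemma LB:
  assumes inv: "is_kast_inverse n a Kinv" and ij: "i < n" "j \<le> n"
  shows "(\<Sum>k\<le>n. \<Sum>l<n. Kinv (wv i j) (bv k l) * KSf a n S k l) = S i j"
proof -
  have wW: "wv i j \<in> aztec_W n" using ij by (auto simp: W_eq)
  have d: "(\<Sum>k\<le>n. \<Sum>l<n. Kinv (wv i j) (bv k l) * kast a (bv k l) (wv i' j')) = (if i' = i \<and> j' = j then 1 else 0)"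
    if "i' < n" "j' \<le> n" for i' j'
  proof -
    have "wv i' j' \<in> aztec_W n" using that by (auto simp: W_eq)
    with inv wW have "(\<Sum>y\<in>aztec_B n. Kinv (wv i j) y * kast a y (wv i' j')) = (if wv i j = wv i' j' then 1 else 0)"
      unfolding is_kast_inverse_def by blast
    then show ?thesis by (auto simp: sumB wv_inj)
  qed
  have "S i j = (\<Sum>i'<n. \<Sum>j'\<le>n. S i' j' * (if i' = i \<and> j' = j then 1 else 0))"
    using ij by (simp add: if0_mult[symmetric] mult.commute[of "S _ _"] dsum4[where c=1, simplified])
  also have "\<dots> = (\<Sum>i'<n. \<Sum>j'\<le>n. \<Sum>k\<le>n. \<Sum>l<n. S i' j' * (Kinv (wv i j) (bv k l) * kast a (bv k l) (wv i' j')))"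
  proof (intro sum.cong refl)
    fix i' j' assume "i' \<in> {..<n}" "j' \<in> {..n}"
    then show "S i' j' * (if i' = i \<and> j' = j then 1 else 0) = (\<Sum>k\<le>n. \<Sum>l<n. S i' j' * (Kinv (wv i j) (bv k l) * kast a (bv k l) (wv i' j')))"
      by (simp add: d sum_distrib_left[symmetric])
  qed
  also have "\<dots> = (\<Sum>k\<le>n. \<Sum>l<n. \<Sum>i'<n. \<Sum>j'\<le>n. S i' j' * (Kinv (wv i j) (bv k l) * kast a (bv k l) (wv i' j')))"
    by (rule swap4)
  also have "\<dots> = (\<Sum>k\<le>n. \<Sum>l<n. Kinv (wv i j) (bv k l) * KSf a n S k l)"
  proof (intro sum.cong refl)
    fix k l assume "k \<in> {..n}" "l \<in> {..<n}"
    then have "KSf a n S k l = (\<Sum>i<n. \<Sum>j\<le>n. kast a (bv k l) (wv i j) * S i j)"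
      unfolding KSf_def by (subst KS_inner) auto
    then show "(\<Sum>i'<n. \<Sum>j'\<le>n. S i' j' * (Kinv (wv i j) (bv k l) * kast a (bv k l) (wv i' j'))) = Kinv (wv i j) (bv k l) * KSf a n S k l"
      by (simp add: sum_distrib_left mult_ac)
  qed
  finally show ?thesis by simp
qed

lemma KT_mono:
  assumes n: "n \<ge> 1" and ij: "i < n" "j \<le> n" and T: "T = (\<lambda>k l. u^k * v^(l+1))"
  shows "KTf a n T i j =
    u^i * v^j * (1 + u*v + complex_of_real a * \<i> * (u+v))
    - (if j = 0 then u^i * (1 + complex_of_real a * \<i> * u) else 0)
    - (if j = n then u^i * v^(n+1) * (u + complex_of_real a * \<i>) else 0)"
proof (cases j)
  case 0
  then show ?thesis using n by (simp add: KTf_def T algebra_simps)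
next
  case (Suc j')
  show ?thesis
  proof (cases "j = n")
    case True
    then have nn: "n = Suc j'" using Suc by simp
    show ?thesis using Suc True unfolding nn by (simp add: KTf_def T algebra_simps)
  next
    case False
    then have "j < n" using ij by simp
    then show ?thesis using Suc n by (simp add: KTf_def T algebra_simps)
  qed
qed

lemma W_rel:
  assumes inv: "is_kast_inverse n a Kinv" and n: "n \<ge> 1" and kl: "k \<le> n" "l < n"
  shows "(1 + u*v + complex_of_real a * \<i> * (u+v)) * (\<Sum>i<n. \<Sum>j\<le>n. Kinv (wv i j) (bv k l) * (u^i * v^j))
     = u^k * v^(l+1) + (1 + complex_of_real a * \<i> * u) * (\<Sum>i<n. Kinv (wv i 0) (bv k l) * u^i)
       + v^(n+1) * (u + complex_of_real a * \<i>) * (\<Sum>i<n. Kinv (wv i n) (bv k l) * u^i)"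
proof -
  define C where "C = 1 + u*v + complex_of_real a * \<i> * (u+v)"
  define T where "T = (\<lambda>k l. u^k * v^(l+1))"
  define \<alpha> where "\<alpha> = complex_of_real a * \<i>"
  have "u^k * v^(l+1) = (\<Sum>i<n. \<Sum>j\<le>n. Kinv (wv i j) (bv k l) * KTf a n T i j)"
    using LA[OF inv kl, of T] by (simp add: T_def)
  also have "\<dots> = (\<Sum>i<n. \<Sum>j\<le>n. C * (Kinv (wv i j) (bv k l) * (u^i * v^j))
        - (if j = 0 then Kinv (wv i 0) (bv k l) * u^i * (1 + \<alpha> * u) else 0)
        - (if j = n then Kinv (wv i n) (bv k l) * u^i * v^(n+1) * (u + \<alpha>) else 0))"
  proof (intro sum.cong refl)
    fix i j assume "i \<in> {..<n}" "j \<in> {..n}"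
    then have eq: "KTf a n T i j = u^i * v^j * C
    - (if j = 0 then u^i * (1 + \<alpha> * u) else 0) - (if j = n then u^i * v^(n+1) * (u + \<alpha>) else 0)"
      unfolding C_def \<alpha>_def by (intro KT_mono[OF n] T_def) auto
    then show "Kinv (wv i j) (bv k l) * KTf a n T i j = C * (Kinv (wv i j) (bv k l) * (u^i * v^j))
        - (if j = 0 then Kinv (wv i 0) (bv k l) * u^i * (1 + \<alpha> * u) else 0)
        - (if j = n then Kinv (wv i n) (bv k l) * u^i * v^(n+1) * (u + \<alpha>) else 0)"
      by (subst eq) (cases "j = 0"; cases "j = n"; simp add: algebra_simps)
  qed
  also have "\<dots> = C * (\<Sum>i<n. \<Sum>j\<le>n. Kinv (wv i j) (bv k l) * (u^i * v^j))
       - (1 + \<alpha> * u) * (\<Sum>i<n. Kinv (wv i 0) (bv k l) * u^i)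
       - v^(n+1) * (u + \<alpha>) * (\<Sum>i<n. Kinv (wv i n) (bv k l) * u^i)"
    by (simp add: sum_subtractf sum_distrib_left sum.delta sum.distrib algebra_simps)
  finally show ?thesis unfolding C_def \<alpha>_def by (simp add: algebra_simps)
qed

lemma KS_mono:
  assumes n: "n \<ge> 1" and kl: "k \<le> n" "l < n" and S: "S = (\<lambda>i j. s^(i+1) * t^j)"
  shows "KSf a n S k l =
    s^k * t^l * (1 + s*t + complex_of_real a * \<i> * (s+t))
    - (if k = 0 then t^l * (1 + complex_of_real a * \<i> * t) else 0)
    - (if k = n then s^(n+1) * t^l * (t + complex_of_real a * \<i>) else 0)"
proof (cases k)
  case 0
  then show ?thesis using n by (simp add: KSf_def S algebra_simps)
next
  case (Suc k')
  show ?thesis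
  proof (cases "k = n")
    case True
    then have nn: "n = Suc k'" using Suc by simp
    show ?thesis using Suc True unfolding nn by (simp add: KSf_def S algebra_simps)
  next
    case False
    then have "k < n" using kl by simp
    then show ?thesis using Suc n by (simp add: KSf_def S algebra_simps)
  qed
qed

lemma sum_if_const: "(\<Sum>l\<in>L. if P then f l else 0) = (if P then (\<Sum>l\<in>L. f l) else (0::complex))"
  by (cases P) auto

lemma B_rel:
  assumes inv: "is_kast_inverse n a Kinv" and n: "n \<ge> 1" and ij: "i < n" "j \<le> n"
  shows "(1 + s*t + complex_of_real a * \<i> * (s+t)) * (\<Sum>k\<le>n. \<Sum>l<n. Kinv (wv i j) (bv k l) * (s^k * t^l))
     = s^(i+1) * t^j + (1 + complex_of_real a * \<i> * t) * (\<Sum>l<n. Kinv (wv i j) (bv 0 l) * t^l)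
       + s^(n+1) * (t + complex_of_real a * \<i>) * (\<Sum>l<n. Kinv (wv i j) (bv n l) * t^l)"
proof -
  define C where "C = 1 + s*t + complex_of_real a * \<i> * (s+t)"
  define S where "S = (\<lambda>i j. s^(i+1) * t^j)"
  define \<alpha> where "\<alpha> = complex_of_real a * \<i>"
  have "s^(i+1) * t^j = (\<Sum>k\<le>n. \<Sum>l<n. Kinv (wv i j) (bv k l) * KSf a n S k l)"
    using LB[OF inv ij, of S] by (simp add: S_def)
  also have "\<dots> = (\<Sum>k\<le>n. \<Sum>l<n. C * (Kinv (wv i j) (bv k l) * (s^k * t^l))
        - (if k = 0 then Kinv (wv i j) (bv 0 l) * t^l * (1 + \<alpha> * t) else 0)
        - (if k = n then Kinv (wv i j) (bv n l) * s^(n+1) * t^l * (t + \<alpha>) else 0))"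
  proof (intro sum.cong refl)
    fix k l assume "k \<in> {..n}" "l \<in> {..<n}"
    then have eq: "KSf a n S k l = s^k * t^l * C
    - (if k = 0 then t^l * (1 + \<alpha> * t) else 0) - (if k = n then s^(n+1) * t^l * (t + \<alpha>) else 0)"
      unfolding C_def \<alpha>_def by (intro KS_mono[OF n] S_def) auto
    then show "Kinv (wv i j) (bv k l) * KSf a n S k l = C * (Kinv (wv i j) (bv k l) * (s^k * t^l))
        - (if k = 0 then Kinv (wv i j) (bv 0 l) * t^l * (1 + \<alpha> * t) else 0)
        - (if k = n then Kinv (wv i j) (bv n l) * s^(n+1) * t^l * (t + \<alpha>) else 0)"
      by (subst eq) (cases "k = 0"; cases "k = n"; simp add: algebra_simps)
  qed
  also have "\<dots> = C * (\<Sum>k\<le>n. \<Sum>l<n. Kinv (wv i j) (bv k l) * (s^k * t^l))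
       - (1 + \<alpha> * t) * (\<Sum>l<n. Kinv (wv i j) (bv 0 l) * t^l)
       - s^(n+1) * (t + \<alpha>) * (\<Sum>l<n. Kinv (wv i j) (bv n l) * t^l)"
    by (simp add: sum_subtractf sum_distrib_left sum.delta sum.distrib sum_if_const algebra_simps)
  finally show ?thesis unfolding C_def \<alpha>_def by (simp add: algebra_simps)
qed

lemma KT_kern:
  assumes n: "n \<ge> 1" and ij: "i < n" "j \<le> n"
    and p: "p = - (1 + complex_of_real a * \<i> * u)" and q: "q = u + complex_of_real a * \<i>"
    and T: "T = (\<lambda>k l. u^k * p^(l+1) * q^(n - l - 1))"
  shows "KTf a n T i j = (if j = 0 then - (1 + complex_of_real a * \<i> * u) * u^i * q^n else 0)
     + (if j = n then (1 + complex_of_real a * \<i> * u) * u^i * p^n else 0)"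
proof (cases j)
  case 0
  obtain m where m: "n = Suc m" using n by (cases n) auto
  show ?thesis unfolding 0 m by (simp add: KTf_def T p q m algebra_simps)
next
  case (Suc j')
  show ?thesis
  proof (cases "j = n")
    case True
    then have nn: "n = Suc j'" using Suc by simp
    have jj: "j = Suc j'" using Suc .
    show ?thesis unfolding jj nn by (simp add: KTf_def T p q nn algebra_simps)
  next
    case False
    then obtain r where r: "n = j + Suc r" using ij by (metis add_Suc_right le_neq_implies_less less_imp_Suc_add)
    have e1: "n - j - 1 = r" "n - (j - 1) - 1 = Suc r" "n - j = Suc r" using r Suc by auto
    have "KTf a n T i j = u^(i+1) * p^(j+1) * q^r + u^i * p^j * q^(Suc r)
       + complex_of_real a * \<i> * (u^i * p^(j+1) * q^r) + complex_of_real a * \<i> * (u^(i+1) * p^j * q^(Suc r))"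
      using r Suc by (simp add: KTf_def T e1)
    also have "\<dots> = u^i * p^j * q^r * ((u + complex_of_real a * \<i>) * p + (1 + complex_of_real a * \<i> * u) * q)"
      by (simp add: algebra_simps)
    also have "\<dots> = 0"
    proof -
      have "(u + complex_of_real a * \<i>) * p + (1 + complex_of_real a * \<i> * u) * q = 0"
        unfolding p q by (simp add: algebra_simps)
      then show ?thesis by simp
    qed
    finally show ?thesis using Suc False by simp
  qed
qed

lemma Ker_rel:
  assumes inv: "is_kast_inverse n a Kinv" and n: "n \<ge> 1" and kl: "k \<le> n" "l < n"
  shows "(1 + complex_of_real a * \<i> * u) * ((- 1)^n * (1 + complex_of_real a * \<i> * u)^n * (\<Sum>i<n. Kinv (wv i n) (bv k l) * u^i)
          - (u + complex_of_real a * \<i>)^n * (\<Sum>i<n. Kinv (wv i 0) (bv k l) * u^i))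
     = u^k * (- (1 + complex_of_real a * \<i> * u))^(l+1) * (u + complex_of_real a * \<i>)^(n - l - 1)"
proof -
  define p where "p = - (1 + complex_of_real a * \<i> * u)"
  define q where "q = u + complex_of_real a * \<i>"
  define T where "T = (\<lambda>k l. u^k * p^(l+1) * q^(n - l - 1))"
  define \<beta> where "\<beta> = 1 + complex_of_real a * \<i> * u"
  have "u^k * p^(l+1) * q^(n - l - 1) = (\<Sum>i<n. \<Sum>j\<le>n. Kinv (wv i j) (bv k l) * KTf a n T i j)"
    using LA[OF inv kl, of T] by (simp add: T_def)
  also have "\<dots> = (\<Sum>i<n. \<Sum>j\<le>n. (if j = 0 then - \<beta> * q^n * (Kinv (wv i 0) (bv k l) * u^i) else 0)
        + (if j = n then \<beta> * p^n * (Kinv (wv i n) (bv k l) * u^i) else 0))"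
  proof (intro sum.cong refl)
    fix i j assume "i \<in> {..<n}" "j \<in> {..n}"
    then have eq: "KTf a n T i j = (if j = 0 then - \<beta> * u^i * q^n else 0) + (if j = n then \<beta> * u^i * p^n else 0)"
      unfolding \<beta>_def by (intro KT_kern[OF n _ _ p_def q_def T_def]) auto
    show "Kinv (wv i j) (bv k l) * KTf a n T i j = (if j = 0 then - \<beta> * q^n * (Kinv (wv i 0) (bv k l) * u^i) else 0)
        + (if j = n then \<beta> * p^n * (Kinv (wv i n) (bv k l) * u^i) else 0)"
      by (subst eq) (cases "j = 0"; cases "j = n"; simp add: algebra_simps)
  qed
  also have "\<dots> = (\<Sum>i<n. - \<beta> * q^n * (Kinv (wv i 0) (bv k l) * u^i)) + (\<Sum>i<n. \<beta> * p^n * (Kinv (wv i n) (bv k l) * u^i))"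
    by (simp add: sum.distrib[symmetric] sum.delta) (rule sum.cong, auto simp: sum.distrib)
  also have "\<dots> = \<beta> * (p^n * (\<Sum>i<n. Kinv (wv i n) (bv k l) * u^i) - q^n * (\<Sum>i<n. Kinv (wv i 0) (bv k l) * u^i))"
  proof -
    have e1: "(\<Sum>i<n. - \<beta> * q^n * (Kinv (wv i 0) (bv k l) * u^i)) = - \<beta> * q^n * (\<Sum>i<n. Kinv (wv i 0) (bv k l) * u^i)"
      by (simp add: sum_distrib_left)
    have e2: "(\<Sum>i<n. \<beta> * p^n * (Kinv (wv i n) (bv k l) * u^i)) = \<beta> * p^n * (\<Sum>i<n. Kinv (wv i n) (bv k l) * u^i)"
      by (simp add: sum_distrib_left)
    show ?thesis unfolding e1 e2 by (simp add: algebra_simps)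
  qed
  finally have F: "u^k * p^(l+1) * q^(n - l - 1) = \<beta> * (p^n * (\<Sum>i<n. Kinv (wv i n) (bv k l) * u^i) - q^n * (\<Sum>i<n. Kinv (wv i 0) (bv k l) * u^i))" .
  have pb: "- \<beta> = p" by (simp add: p_def \<beta>_def)
  have pn: "(- 1)^n * \<beta>^n = p^n" by (metis pb mult_minus1 power_mult_distrib)
  show ?thesis unfolding \<beta>_def[symmetric] q_def[symmetric] pb pn using F by (simp only: mult_ac)
qed

lemma kuniq:
  fixes D E :: "complex poly" and \<alpha> c :: complex
  assumes eq: "[:\<alpha>,1:]^n * D = smult c ([:1,\<alpha>:]^n * E)"
    and deg: "degree D < n" and a0: "\<alpha> \<noteq> 0" and a1: "\<alpha> * \<alpha> \<noteq> 1"
  shows "D = 0"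
proof (rule ccontr)
  assume D0: "D \<noteq> 0"
  define r where "r = - 1 / \<alpha>"
  have pa: "poly [:\<alpha>,1:] r \<noteq> 0"
  proof
    assume "poly [:\<alpha>,1:] r = 0"
    then have "\<alpha> - 1/\<alpha> = 0" by (simp add: r_def)
    then have "\<alpha> * \<alpha> = 1" using a0 by (simp add: field_simps)
    with a1 show False by simp
  qed
  have L0: "[:\<alpha>,1:]^n * D \<noteq> 0" using D0 by simp
  have ordL: "order r ([:\<alpha>,1:]^n * D) = order r D"
  proof -
    have "order r ([:\<alpha>,1:]^n * D) = order r ([:\<alpha>,1:]^n) + order r D"
      using L0 by (rule order_mult)
    moreover have "order r ([:\<alpha>,1:]^n) = 0"
      by (rule order_0I) (use pa in \<open>simp add: poly_power\<close>)
    ultimately show ?thesis by simp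
  qed
  have "order r D \<le> degree D" using D0 by (rule order_degree)
  with deg have lt: "order r ([:\<alpha>,1:]^n * D) < n" using ordL by simp
  have c0: "c \<noteq> 0" and E0: "E \<noteq> 0" using L0 eq by auto
  have lin: "[:1,\<alpha>:] = smult \<alpha> [:-r,1:]" using a0 by (simp add: r_def)
  have "order r (smult c ([:1,\<alpha>:]^n * E)) = order r ([:1,\<alpha>:]^n * E)" using c0 by (rule order_smult)
  also have "\<dots> = order r ([:1,\<alpha>:]^n) + order r E"
    using E0 a0 by (intro order_mult) auto
  also have "order r ([:1,\<alpha>:]^n) = n"
    unfolding lin smult_power using a0 by (simp add: order_smult order_power_n_n)
  finally have "order r (smult c ([:1,\<alpha>:]^n * E)) \<ge> n" by simp
  with lt eq show False by simp
qed

lemma kuniq2: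
  fixes PA PB QA QB S :: "complex poly" and \<alpha> c :: complex
  assumes e1: "[:\<alpha>,1:]^n * PA - smult c ([:1,\<alpha>:]^n * PB) = S"
    and e2: "[:\<alpha>,1:]^n * QA - smult c ([:1,\<alpha>:]^n * QB) = S"
    and d1: "degree PA < n" and d2: "degree QA < n" and a0: "\<alpha> \<noteq> 0" and a1: "\<alpha> * \<alpha> \<noteq> 1" and c0: "c \<noteq> 0"
  shows "PA = QA \<and> PB = QB"
proof -
  have "[:\<alpha>,1:]^n * PA - smult c ([:1,\<alpha>:]^n * PB) = [:\<alpha>,1:]^n * QA - smult c ([:1,\<alpha>:]^n * QB)"
    using e1 e2 by simp
  then have "[:\<alpha>,1:]^n * PA - [:\<alpha>,1:]^n * QA = smult c ([:1,\<alpha>:]^n * PB) - smult c ([:1,\<alpha>:]^n * QB)"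
    by (simp add: algebra_simps)
  then have "[:\<alpha>,1:]^n * (PA - QA) = smult c ([:1,\<alpha>:]^n * (PB - QB))"
    by (simp add: right_diff_distrib smult_diff_right)
  moreover have "degree (PA - QA) < n" using d1 d2 degree_diff_le_max[of PA QA] by simp
  ultimately have "PA - QA = 0" using a0 a1 by (intro kuniq) auto
  then have A: "PA = QA" by simp
  with e1 e2 have "[:\<alpha>,1:]^n * QA - smult c ([:1,\<alpha>:]^n * PB) = [:\<alpha>,1:]^n * QA - smult c ([:1,\<alpha>:]^n * QB)" by simp
  then have "smult c ([:1,\<alpha>:]^n * PB) = smult c ([:1,\<alpha>:]^n * QB)" by simp
  then have "smult c ([:1,\<alpha>:]^n * (PB - QB)) = 0" by (simp add: right_diff_distrib smult_diff_right)
  then have "PB - QB = 0" using a0 c0 by simp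
  then have "PB = QB" by simp
  with A show ?thesis by simp
qed

lemma geo: "((x::complex) - y) * (\<Sum>m<n. y^m * x^(n - 1 - m)) = x^n - y^n"
proof (cases n)
  case 0 then show ?thesis by simp
next
  case (Suc k)
  have "y^(Suc k) - x^(Suc k) = (y - x) * (\<Sum>p<Suc k. y^p * x^(k - p))"
    by (rule diff_power_eq_sum)
  then show ?thesis unfolding Suc by (simp add: algebra_simps)
qed

lemma poly_zero_from_pointwise:
  fixes P Dp :: "complex poly"
  assumes "Dp \<noteq> 0" "\<And>u. poly Dp u * poly P u = 0"
  shows "P = 0"
proof -
  have "poly (Dp * P) = poly 0" using assms(2) by (auto simp: fun_eq_iff)
  then have "Dp * P = 0" by (simp only: poly_eq_poly_eq_iff)
  with assms(1) show ?thesis by simp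
qed

definition QA :: "nat \<Rightarrow> complex \<Rightarrow> complex \<Rightarrow> complex \<Rightarrow> complex poly" where
  "QA n \<alpha> A t = smult (- \<alpha> / (1 + A*A)) (\<Sum>m<n. [:(1+\<alpha>*t)/(1+A*A), (1+\<alpha>*t)/(1+A*A)*\<alpha>:]^m)"
definition QB :: "nat \<Rightarrow> complex \<Rightarrow> complex \<Rightarrow> complex \<Rightarrow> complex poly" where
  "QB n \<alpha> A t = smult (1 / (1 + A*A)) (\<Sum>m<n. [:- ((1+\<alpha>*t)/(1+A*A)) * \<alpha>, - ((1+\<alpha>*t)/(1+A*A)):]^m * [:t^(n - 1 - m):])"
definition QBR :: "nat \<Rightarrow> complex \<Rightarrow> complex \<Rightarrow> complex \<Rightarrow> complex poly" where
  "QBR n \<alpha> A t = smult (1 / (1 + A*A)) (\<Sum>m<n. [:- ((t+\<alpha>)/(1+A*A)), - ((t+\<alpha>)/(1+A*A)) * \<alpha>:]^m * monom 1 (n - 1 - m))"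
definition QTR :: "nat \<Rightarrow> complex \<Rightarrow> complex \<Rightarrow> complex \<Rightarrow> complex poly" where
  "QTR n \<alpha> A t = smult (- \<alpha> / (1 + A*A)) (\<Sum>m<n. [:(t+\<alpha>)/(1+A*A) * \<alpha>, (t+\<alpha>)/(1+A*A):]^m * monom (t^(n - 1 - m)) (n - 1 - m))"
definition srcP :: "nat \<Rightarrow> complex \<Rightarrow> complex \<Rightarrow> nat \<Rightarrow> complex poly" where
  "srcP n \<alpha> t k = monom 1 k * (\<Sum>l<n. smult ((- t)^l) ([:1,\<alpha>:]^l * [:\<alpha>,1:]^(n - l - 1)))"

lemma pb1: fixes c :: complex shows "poly [:c, c*\<alpha>:] u = c * (1 + \<alpha>*u)" by (simp add: field_simps)
lemma pb2: fixes c :: complex shows "poly [:c*\<alpha>, c:] u = c * (u + \<alpha>)" by (simp add: field_simps)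
lemma pb3: fixes c :: complex shows "poly [:- c*\<alpha>, - c:] u = - c * (u + \<alpha>)" by (simp add: field_simps)
lemma pb4: fixes c :: complex shows "poly [:- c, - c*\<alpha>:] u = - c * (1 + \<alpha>*u)" by (simp add: algebra_simps)

lemma poly_QA: "poly (QA n \<alpha> A t) u = (- \<alpha> / (1 + A*A)) * (\<Sum>m<n. ((1+\<alpha>*t)/(1+A*A) * (1 + \<alpha>*u))^m)"
proof -
  note b = pb1
  show ?thesis unfolding QA_def poly_smult poly_sum poly_power poly_mult b  by (simp add:  mult_ac)
qed
lemma poly_QB: "poly (QB n \<alpha> A t) u = (1 / (1 + A*A)) * (\<Sum>m<n. (- ((1+\<alpha>*t)/(1+A*A)) * (u + \<alpha>))^m * t^(n - 1 - m))"
proof -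
  note b = pb3
  show ?thesis unfolding QB_def poly_smult poly_sum poly_power poly_mult b  by (simp add:  mult_ac)
qed
lemma poly_QBR: "poly (QBR n \<alpha> A t) u = (1 / (1 + A*A)) * (\<Sum>m<n. (- ((t+\<alpha>)/(1+A*A)) * (1 + \<alpha>*u))^m * u^(n - 1 - m))"
proof -
  note b = pb4
  show ?thesis unfolding QBR_def poly_smult poly_sum poly_power poly_mult b poly_monom by (simp add:  mult_ac)
qed
lemma poly_QTR: "poly (QTR n \<alpha> A t) u = (- \<alpha> / (1 + A*A)) * (\<Sum>m<n. ((t+\<alpha>)/(1+A*A) * (u + \<alpha>))^m * (u*t)^(n - 1 - m))"
proof -
  note b = pb2
  show ?thesis unfolding QTR_def poly_smult poly_sum poly_power poly_mult b poly_monom by (simp add: power_mult_distrib mult_ac)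
qed
lemma poly_srcP: "poly (srcP n \<alpha> t k) u = u^k * (\<Sum>l<n. (- t)^l * (1 + \<alpha>*u)^l * (u + \<alpha>)^(n - 1 - l))"
proof -
  have b: "poly [:1,\<alpha>:] u = 1 + \<alpha>*u" "poly [:\<alpha>,1:] u = u + \<alpha>" by (simp_all add: algebra_simps)
  show ?thesis by (simp add: srcP_def poly_sum poly_power poly_monom power_mult_distrib b mult_ac del: poly_pCons)
qed

lemma negpow: "(- (x::complex))^n = (-1)^n * x^n"
  by (metis mult_minus1 power_mult_distrib)

lemma m1sq: "(-1::complex)^n * (-1)^n = 1"
  by (metis power_mult_distrib mult_minus1 minus_minus power_one mult_1_right)

lemma candA:
  fixes \<alpha> A t :: complex
  assumes aA: "\<alpha> * \<alpha> = - (A*A)" and A1: "1 + A*A \<noteq> 0"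
  shows "[:\<alpha>,1:]^n * QA n \<alpha> A t - smult ((-1)^n) ([:1,\<alpha>:]^n * QB n \<alpha> A t) = srcP n \<alpha> t 0"
proof -
  have Dp0: "[:\<alpha>+t, 1+\<alpha>*t:] \<noteq> 0"
  proof
    assume "[:\<alpha>+t, 1+\<alpha>*t:] = 0"
    then have h: "\<alpha> + t = 0" "1 + \<alpha>*t = 0" by auto
    have "t = (\<alpha> + t) - \<alpha>" by simp
    with h have "t = - \<alpha>" "1 + \<alpha>*t = 0" by simp_all
    then have "1 - \<alpha>*\<alpha> = 0" by simp
    with aA A1 show False by simp
  qed
  have pt: "poly [:\<alpha>+t, 1+\<alpha>*t:] u * ((u+\<alpha>)^n * poly (QA n \<alpha> A t) u - (-1)^n * ((1+\<alpha>*u)^n * poly (QB n \<alpha> A t) u) - poly (srcP n \<alpha> t 0) u) = 0" for u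
  proof -
    define D where "D = u + \<alpha> + t + \<alpha>*t*u"
    define \<beta> where "\<beta> = 1 + \<alpha>*u"
    define q where "q = u + \<alpha>"
    define c0 where "c0 = (1+\<alpha>*t)/(1+A*A)"
    define X where "X = c0 * \<beta>"
    define Y where "Y = - c0 * q"
    have pD: "poly [:\<alpha>+t, 1+\<alpha>*t:] u = D" by (simp add: D_def algebra_simps)
    have h1: "D * (- \<alpha> / (1 + A*A)) = 1 - X"
      using A1 unfolding D_def X_def c0_def \<beta>_def by (simp add: field_simps) (use aA in algebra)
    have h2: "D * (1 / (1 + A*A)) = t - Y"
      using A1 unfolding D_def Y_def c0_def q_def by (simp add: field_simps) (use aA in algebra)
    have h3: "D = q - (- t * \<beta>)" unfolding D_def q_def \<beta>_def by (simp add: algebra_simps)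
    have eA: "D * poly (QA n \<alpha> A t) u = 1 - X^n"
    proof -
      have "D * poly (QA n \<alpha> A t) u = (D * (- \<alpha> / (1 + A*A))) * (\<Sum>m<n. X^m)"
        unfolding poly_QA X_def c0_def \<beta>_def by (simp add: mult_ac)
      also have "\<dots> = 1 - X^n" unfolding h1 by (rule one_diff_power_eq[symmetric])
      finally show ?thesis .
    qed
    have eB: "D * poly (QB n \<alpha> A t) u = t^n - Y^n"
    proof -
      have "D * poly (QB n \<alpha> A t) u = (D * (1 / (1 + A*A))) * (\<Sum>m<n. Y^m * t^(n - 1 - m))"
        unfolding poly_QB Y_def c0_def q_def by (simp add: mult_ac)
      also have "\<dots> = t^n - Y^n" unfolding h2 by (rule geo)
      finally show ?thesis .
    qed
    have eS: "D * poly (srcP n \<alpha> t 0) u = q^n - (- t * \<beta>)^n"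
    proof -
      have ps: "poly (srcP n \<alpha> t 0) u = (\<Sum>l<n. (- t * \<beta>)^l * q^(n - 1 - l))"
        unfolding poly_srcP power_mult_distrib q_def \<beta>_def by (simp add: mult_ac)
      have "D * poly (srcP n \<alpha> t 0) u = (q - (- t * \<beta>)) * (\<Sum>l<n. (- t * \<beta>)^l * q^(n - 1 - l))"
        unfolding ps using h3 by simp
      also have "\<dots> = q^n - (- t * \<beta>)^n" by (rule geo)
      finally show ?thesis .
    qed
    have "D * ((u+\<alpha>)^n * poly (QA n \<alpha> A t) u - (-1)^n * ((1+\<alpha>*u)^n * poly (QB n \<alpha> A t) u) - poly (srcP n \<alpha> t 0) u)
        = q^n * (D * poly (QA n \<alpha> A t) u) - (-1)^n * \<beta>^n * (D * poly (QB n \<alpha> A t) u) - D * poly (srcP n \<alpha> t 0) u"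
      unfolding q_def \<beta>_def by (simp add: algebra_simps)
    also have "\<dots> = q^n * (1 - X^n) - (-1)^n * \<beta>^n * (t^n - Y^n) - (q^n - (- t * \<beta>)^n)"
      unfolding eA eB eS ..
    also have "\<dots> = 0"
    proof -
      have "X^n = c0^n * \<beta>^n" "Y^n = (-1)^n * c0^n * q^n" "(- t * \<beta>)^n = (-1)^n * t^n * \<beta>^n"
        unfolding X_def Y_def by (simp_all add: power_mult_distrib negpow[of "c0*q"] negpow[of "t*\<beta>"] mult.assoc)
      then show ?thesis using m1sq[of n] by (simp add: algebra_simps)
    qed
    finally show ?thesis unfolding pD .
  qed
  show ?thesis
  proof -
    have "[:\<alpha>,1:]^n * QA n \<alpha> A t - smult ((-1)^n) ([:1,\<alpha>:]^n * QB n \<alpha> A t) - srcP n \<alpha> t 0 = 0"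
    proof (rule poly_zero_from_pointwise[OF Dp0])
      fix u
      show "poly [:\<alpha>+t, 1+\<alpha>*t:] u * poly ([:\<alpha>,1:]^n * QA n \<alpha> A t - smult ((-1)^n) ([:1,\<alpha>:]^n * QB n \<alpha> A t) - srcP n \<alpha> t 0) u = 0"
        using pt[of u] by (simp add: poly_power algebra_simps del: poly_pCons) (simp add: algebra_simps)
    qed
    then show ?thesis by simp
  qed
qed

lemma candB:
  fixes \<alpha> A t :: complex
  assumes aA: "\<alpha> * \<alpha> = - (A*A)" and A1: "1 + A*A \<noteq> 0"
  shows "[:\<alpha>,1:]^n * QBR n \<alpha> A t - smult ((-1)^n) ([:1,\<alpha>:]^n * QTR n \<alpha> A t) = srcP n \<alpha> t n"
proof -
  have Dp0: "[:\<alpha>+t, 1+\<alpha>*t:] \<noteq> 0"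
  proof
    assume "[:\<alpha>+t, 1+\<alpha>*t:] = 0"
    then have h: "\<alpha> + t = 0" "1 + \<alpha>*t = 0" by auto
    have "t = (\<alpha> + t) - \<alpha>" by simp
    with h have "t = - \<alpha>" "1 + \<alpha>*t = 0" by simp_all
    then have "1 - \<alpha>*\<alpha> = 0" by simp
    with aA A1 show False by simp
  qed
  have pt: "poly [:\<alpha>+t, 1+\<alpha>*t:] u * ((u+\<alpha>)^n * poly (QBR n \<alpha> A t) u - (-1)^n * ((1+\<alpha>*u)^n * poly (QTR n \<alpha> A t) u) - poly (srcP n \<alpha> t n) u) = 0" for u
  proof -
    define D where "D = u + \<alpha> + t + \<alpha>*t*u"
    define \<beta> where "\<beta> = 1 + \<alpha>*u"
    define q where "q = u + \<alpha>"
    define c1 where "c1 = (t+\<alpha>)/(1+A*A)"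
    define Z where "Z = - c1 * \<beta>"
    define W where "W = c1 * q"
    have pD: "poly [:\<alpha>+t, 1+\<alpha>*t:] u = D" by (simp add: D_def algebra_simps)
    have h1: "D * (- \<alpha> / (1 + A*A)) = u*t - W"
      using A1 unfolding D_def W_def c1_def q_def by (simp add: field_simps) (use aA in algebra)
    have h2: "D * (1 / (1 + A*A)) = u - Z"
      using A1 unfolding D_def Z_def c1_def \<beta>_def by (simp add: field_simps) (use aA in algebra)
    have h3: "D = q - (- t * \<beta>)" unfolding D_def q_def \<beta>_def by (simp add: algebra_simps)
    have eA: "D * poly (QBR n \<alpha> A t) u = u^n - Z^n"
    proof -
      have "D * poly (QBR n \<alpha> A t) u = (D * (1 / (1 + A*A))) * (\<Sum>m<n. Z^m * u^(n - 1 - m))"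
        unfolding poly_QBR Z_def c1_def \<beta>_def by (simp add: mult_ac)
      also have "\<dots> = u^n - Z^n" unfolding h2 by (rule geo)
      finally show ?thesis .
    qed
    have eB: "D * poly (QTR n \<alpha> A t) u = (u*t)^n - W^n"
    proof -
      have "D * poly (QTR n \<alpha> A t) u = (D * (- \<alpha> / (1 + A*A))) * (\<Sum>m<n. W^m * (u*t)^(n - 1 - m))"
        unfolding poly_QTR W_def c1_def q_def by (simp add: mult_ac)
      also have "\<dots> = (u*t)^n - W^n" unfolding h1 by (rule geo)
      finally show ?thesis .
    qed
    have eS: "D * poly (srcP n \<alpha> t n) u = u^n * (q^n - (- t * \<beta>)^n)"
    proof -
      have ps: "poly (srcP n \<alpha> t n) u = u^n * (\<Sum>l<n. (- t * \<beta>)^l * q^(n - 1 - l))"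
        unfolding poly_srcP power_mult_distrib q_def \<beta>_def by (simp add: mult_ac)
      have "D * poly (srcP n \<alpha> t n) u = u^n * ((q - (- t * \<beta>)) * (\<Sum>l<n. (- t * \<beta>)^l * q^(n - 1 - l)))"
        unfolding ps using h3 by simp
      also have "\<dots> = u^n * (q^n - (- t * \<beta>)^n)" by (simp only: geo)
      finally show ?thesis .
    qed
    have "D * ((u+\<alpha>)^n * poly (QBR n \<alpha> A t) u - (-1)^n * ((1+\<alpha>*u)^n * poly (QTR n \<alpha> A t) u) - poly (srcP n \<alpha> t n) u)
        = q^n * (D * poly (QBR n \<alpha> A t) u) - (-1)^n * \<beta>^n * (D * poly (QTR n \<alpha> A t) u) - D * poly (srcP n \<alpha> t n) u"
      unfolding q_def \<beta>_def by (simp add: algebra_simps)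
    also have "\<dots> = q^n * (u^n - Z^n) - (-1)^n * \<beta>^n * ((u*t)^n - W^n) - u^n * (q^n - (- t * \<beta>)^n)"
      unfolding eA eB eS ..
    also have "\<dots> = 0"
    proof -
      have "Z^n = (-1)^n * c1^n * \<beta>^n" "W^n = c1^n * q^n" "(- t * \<beta>)^n = (-1)^n * t^n * \<beta>^n" "(u*t)^n = u^n * t^n"
        unfolding Z_def W_def by (simp_all add: power_mult_distrib negpow[of "c1*\<beta>"] negpow[of "t*\<beta>"] mult.assoc)
      then show ?thesis using m1sq[of n] by (simp add: algebra_simps)
    qed
    finally show ?thesis unfolding pD .
  qed
  show ?thesis
  proof -
    have "[:\<alpha>,1:]^n * QBR n \<alpha> A t - smult ((-1)^n) ([:1,\<alpha>:]^n * QTR n \<alpha> A t) - srcP n \<alpha> t n = 0"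
    proof (rule poly_zero_from_pointwise[OF Dp0])
      fix u
      show "poly [:\<alpha>+t, 1+\<alpha>*t:] u * poly ([:\<alpha>,1:]^n * QBR n \<alpha> A t - smult ((-1)^n) ([:1,\<alpha>:]^n * QTR n \<alpha> A t) - srcP n \<alpha> t n) u = 0"
        using pt[of u] by (simp add: poly_power algebra_simps del: poly_pCons) (simp add: algebra_simps)
    qed
    then show ?thesis by simp
  qed
qed

lemma deg_lin_pow: "degree ([:c, d:]^m) \<le> m"
proof -
  have "degree ([:c, d:]^m) \<le> degree [:c, d:] * m" by (rule degree_power_le)
  also have "\<dots> \<le> 1 * m" by (intro mult_right_mono) (auto simp: degree_pCons_le)
  finally show ?thesis by simp
qed

lemma deg_geo:
  assumes n: "n \<ge> 1" and r: "\<And>m. m < n \<Longrightarrow> degree (r m) \<le> n - 1 - m"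
  shows "degree (\<Sum>m<n. [:c, d:]^m * r m) < n"
proof (rule degree_sum_less)
  fix m assume "m \<in> {..<n}"
  then have m: "m < n" by simp
  have "degree ([:c, d:]^m * r m) \<le> degree ([:c, d:]^m) + degree (r m)" by (rule degree_mult_le)
  also have "\<dots> \<le> m + (n - 1 - m)" using deg_lin_pow r[OF m] by (rule add_mono)
  finally show "degree ([:c, d:]^m * r m) < n" using m by simp
qed (use n in simp)

lemma deg_QA: "n \<ge> 1 \<Longrightarrow> degree (QA n \<alpha> A t) < n"
proof -
  assume n: "n \<ge> 1"
  have "degree (\<Sum>m<n. [:(1+\<alpha>*t)/(1+A*A), (1+\<alpha>*t)/(1+A*A)*\<alpha>:]^m * 1) < n"
    by (rule deg_geo[OF n]) simp
  then have "degree (\<Sum>m<n. [:(1+\<alpha>*t)/(1+A*A), (1+\<alpha>*t)/(1+A*A)*\<alpha>:]^m) < n" by simp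
  then show ?thesis unfolding QA_def by (rule le_less_trans[OF degree_smult_le])
qed

lemma deg_QBR: "n \<ge> 1 \<Longrightarrow> degree (QBR n \<alpha> A t) < n"
proof -
  assume n: "n \<ge> 1"
  have "degree (\<Sum>m<n. [:- ((t+\<alpha>)/(1+A*A)), - ((t+\<alpha>)/(1+A*A)) * \<alpha>:]^m * monom 1 (n - 1 - m)) < n"
    by (rule deg_geo[OF n]) (simp add: degree_monom_le)
  then show ?thesis unfolding QBR_def by (rule le_less_trans[OF degree_smult_le])
qed

definition cP :: "nat \<Rightarrow> (int \<times> int \<Rightarrow> int \<times> int \<Rightarrow> complex) \<Rightarrow> complex \<Rightarrow> nat \<Rightarrow> nat \<Rightarrow> complex poly" where
  "cP n Kinv t j k = (\<Sum>i<n. monom (\<Sum>l<n. Kinv (wv i j) (bv k l) * t^l) i)"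

lemma poly_cP: "poly (cP n Kinv t j k) u = (\<Sum>i<n. (\<Sum>l<n. Kinv (wv i j) (bv k l) * t^l) * u^i)"
  by (simp add: cP_def poly_sum poly_monom)

lemma deg_cP: "n \<ge> 1 \<Longrightarrow> degree (cP n Kinv t j k) < n"
  unfolding cP_def by (rule degree_sum_less) (auto intro: le_less_trans[OF degree_monom_le])

lemma corner_id:
  assumes inv: "is_kast_inverse n a Kinv" and n: "n \<ge> 1" and k: "k \<le> n"
  shows "[:complex_of_real a * \<i>,1:]^n * cP n Kinv t 0 k - smult ((-1)^n) ([:1,complex_of_real a * \<i>:]^n * cP n Kinv t n k)
     = srcP n (complex_of_real a * \<i>) t k"
proof -
  define \<alpha> where "\<alpha> = complex_of_real a * \<i>"
  have pt: "poly [:1,\<alpha>:] u * poly ([:\<alpha>,1:]^n * cP n Kinv t 0 k - smult ((-1)^n) ([:1,\<alpha>:]^n * cP n Kinv t n k) - srcP n \<alpha> t k) u = 0" for u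
  proof -
    define \<beta> where "\<beta> = 1 + \<alpha>*u"
    define q where "q = u + \<alpha>"
    define Al where "Al l = (\<Sum>i<n. Kinv (wv i 0) (bv k l) * u^i)" for l
    define Bl where "Bl l = (\<Sum>i<n. Kinv (wv i n) (bv k l) * u^i)" for l
    have KR: "\<beta> * ((-1)^n * \<beta>^n * Bl l - q^n * Al l) = u^k * (- \<beta>)^(l+1) * q^(n - l - 1)" if "l < n" for l
      using Ker_rel[OF inv n k that, of u] unfolding \<alpha>_def \<beta>_def q_def Al_def Bl_def .
    have P0: "poly (cP n Kinv t 0 k) u = (\<Sum>l<n. t^l * Al l)"
    proof -
      have "poly (cP n Kinv t 0 k) u = (\<Sum>i<n. \<Sum>l<n. Kinv (wv i 0) (bv k l) * t^l * u^i)"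
        unfolding poly_cP by (simp add: sum_distrib_right)
      also have "\<dots> = (\<Sum>l<n. \<Sum>i<n. Kinv (wv i 0) (bv k l) * t^l * u^i)" by (rule sum.swap)
      also have "\<dots> = (\<Sum>l<n. t^l * Al l)" unfolding Al_def by (simp add: sum_distrib_left mult_ac)
      finally show ?thesis .
    qed
    have Pn: "poly (cP n Kinv t n k) u = (\<Sum>l<n. t^l * Bl l)"
    proof -
      have "poly (cP n Kinv t n k) u = (\<Sum>i<n. \<Sum>l<n. Kinv (wv i n) (bv k l) * t^l * u^i)"
        unfolding poly_cP by (simp add: sum_distrib_right)
      also have "\<dots> = (\<Sum>l<n. \<Sum>i<n. Kinv (wv i n) (bv k l) * t^l * u^i)" by (rule sum.swap)
      also have "\<dots> = (\<Sum>l<n. t^l * Bl l)" unfolding Bl_def by (simp add: sum_distrib_left mult_ac)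
      finally show ?thesis .
    qed
    have PS: "poly (srcP n \<alpha> t k) u = u^k * (\<Sum>l<n. (- t)^l * \<beta>^l * q^(n - 1 - l))"
      unfolding poly_srcP \<beta>_def q_def ..
    have "(\<Sum>l<n. t^l * (\<beta> * ((-1)^n * \<beta>^n * Bl l - q^n * Al l))) = (\<Sum>l<n. t^l * (u^k * (- \<beta>)^(l+1) * q^(n - l - 1)))"
      by (intro sum.cong refl) (simp add: KR)
    also have "\<dots> = - \<beta> * (u^k * (\<Sum>l<n. (- t)^l * \<beta>^l * q^(n - 1 - l)))"
      unfolding sum_distrib_left by (intro sum.cong refl) (simp add: negpow[of \<beta>] negpow[of t] mult_ac)
    finally have S: "\<beta> * ((-1)^n * \<beta>^n * (\<Sum>l<n. t^l * Bl l) - q^n * (\<Sum>l<n. t^l * Al l)) = - \<beta> * poly (srcP n \<alpha> t k) u"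
      unfolding PS by (simp add: sum_distrib_left sum_subtractf algebra_simps)
    have pb: "poly [:1,\<alpha>:] u = \<beta>" "poly [:\<alpha>,1:] u = q" by (simp_all add: \<beta>_def q_def algebra_simps)
    show ?thesis unfolding poly_diff poly_mult poly_smult poly_power pb P0 Pn
      using S by (simp add: algebra_simps)
  qed
  have "[:\<alpha>,1:]^n * cP n Kinv t 0 k - smult ((-1)^n) ([:1,\<alpha>:]^n * cP n Kinv t n k) - srcP n \<alpha> t k = 0"
    by (rule poly_zero_from_pointwise[OF _ pt]) simp
  then show ?thesis unfolding \<alpha>_def by simp
qed

lemma fpoly_sum: "fpoly n X = (\<Sum>m<n. X^m)"
  by (simp add: fpoly_def sum_gp_strict)

lemma shift_pow: "m < n \<Longrightarrow> (z::complex)^(n - 1) * X^m = (z * X)^m * z^(n - 1 - m)"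
proof -
  assume m: "m < n"
  have "z^(n - 1) = z^m * z^(n - 1 - m)" using m by (simp add: power_add[symmetric])
  then show ?thesis by (simp add: power_mult_distrib mult_ac)
qed

lemma F00_eq:
  fixes A :: complex
  shows "F00 n w1 w2 b1 b2 A = w1 * b2 * poly (QA n (A * \<i>) A (b2^2)) (w1^2)"
proof -
  have "(1 + b2\<^sup>2 * A * \<i>) * (1 + w1\<^sup>2 * A * \<i>) / (1 + A\<^sup>2) = (1 + A*\<i>*b2^2)/(1+A*A) * (1 + A*\<i>*w1^2)"
    by (simp add: power2_eq_square mult_ac)
  then show ?thesis unfolding F00_def Fn_def poly_QA fpoly_sum
    by (simp add: power2_eq_square mult_ac)
qed

lemma F01_eq:
  fixes A :: complex
  assumes n: "n \<ge> 1" and A0: "A \<noteq> 0" and A1: "1 + A*A \<noteq> 0" and w1: "w1 \<noteq> 0"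
  shows "F01 n w1 w2 b1 b2 A = w1 * b2 * b1^(2*n) * poly (QBR n (A * \<i>) A (b2^2)) (w1^2)"
proof -
  define u where "u = w1^2"
  define t where "t = b2^2"
  define X where "X = (1 + - t * (1 / A) * \<i>) * (1 + - 1 / u * (1 / A) * \<i>) / (1 + (1 / A)\<^sup>2)"
  have u0: "u \<noteq> 0" using w1 by (simp add: u_def)
  have w: "w1^(2*n - 1) = w1 * u^(n - 1)"
  proof -
    have "2*n - 1 = Suc (2*(n - 1))" using n by simp
    then show ?thesis by (simp add: u_def power_mult)
  qed
  have cst: "\<i> / A * (- (\<i> * (1 / A)) / (1 + (1 / A)\<^sup>2)) = 1 / (1 + A*A)"
    using A0 by (simp add: field_simps power2_eq_square)
  have e1: "1 + (1/A)^2 = (1+A*A)/(A*A)" using A0 by (simp add: field_simps power2_eq_square)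
  have e2: "1 + - t * (1 / A) * \<i> = (A - t*\<i>)/A" using A0 by (simp add: field_simps)
  have e3: "1 + - 1 / u * (1 / A) * \<i> = (A*u - \<i>)/(A*u)" using A0 u0 by (simp add: field_simps)
  have e4: "(A - t*\<i>) * (A*u - \<i>) = - ((t + A*\<i>) * (1 + A*\<i>*u))" by (simp add: algebra_simps)
  have "X = (A - t*\<i>) * (A*u - \<i>) / (u * (1+A*A))"
  proof -
    have nz: "A*A \<noteq> 0" "A*u \<noteq> 0" "u * (1+A*A) \<noteq> 0" "1+A*A \<noteq> 0" "A \<noteq> 0" using A0 A1 u0 by auto
    have "X = ((A - t*\<i>)/A) * ((A*u - \<i>)/(A*u)) / ((1+A*A)/(A*A))" unfolding X_def e1 e2 e3 ..
    also have "\<dots> = (A - t*\<i>) * (A*u - \<i>) * (A*A) / (A * (A*u) * (1+A*A))" by (simp add: nz)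
    also have "\<dots> = (A - t*\<i>) * (A*u - \<i>) * (A*A) / ((u * (1+A*A)) * (A*A))"
      by (simp add: mult_ac)
    also have "\<dots> = (A - t*\<i>) * (A*u - \<i>) / (u * (1+A*A))"
      using nz by (rule_tac nonzero_mult_divide_mult_cancel_right) simp
    finally show ?thesis .
  qed
  then have "u * X = (A - t*\<i>) * (A*u - \<i>) / (1+A*A)"
    using u0 by simp
  also have "\<dots> = - ((t + A*\<i>) * (1 + A*\<i>*u)) / (1+A*A)" unfolding e4 ..
  also have "\<dots> = - ((t + A*\<i>)/(1+A*A)) * (1 + A*\<i>*u)" by simp
  finally have uX: "u * X = - ((t + A*\<i>)/(1+A*A)) * (1 + A*\<i>*u)" .
  have "F01 n w1 w2 b1 b2 A = (- (\<i> * (1 / A)) / (1 + (1 / A)\<^sup>2) * (\<Sum>m<n. X^m)) * (w1 * u^(n - 1)) * b1^(2*n) * b2 * \<i> / A"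
    unfolding F01_def Fn_def fpoly_sum w X_def t_def u_def by simp
  also have "\<dots> = w1 * b2 * b1^(2*n) * (\<i> / A * (- (\<i> * (1 / A)) / (1 + (1 / A)\<^sup>2)) * (\<Sum>m<n. u^(n - 1) * X^m))"
    by (simp add: sum_distrib_left mult_ac sum_negf)
  also have "(\<Sum>m<n. u^(n - 1) * X^m) = (\<Sum>m<n. (u * X)^m * u^(n - 1 - m))"
    by (intro sum.cong refl) (rule shift_pow, simp)
  finally have FF: "F01 n w1 w2 b1 b2 A = w1 * b2 * b1 ^ (2 * n) * (\<i> / A * (- (\<i> * (1 / A)) / (1 + (1 / A)\<^sup>2)) * (\<Sum>m<n. (u * X) ^ m * u ^ (n - 1 - m)))" .
  show ?thesis unfolding FF cst uX poly_QBR u_def[symmetric] t_def[symmetric] by (simp add: mult_ac)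
qed

lemma F10_eq:
  fixes A :: complex
  assumes n: "n \<ge> 1" and A0: "A \<noteq> 0" and A1: "1 + A*A \<noteq> 0" and b2: "b2 \<noteq> 0"
  shows "F10 n w1 w2 b1 b2 A = w1 * b2 * w2^(2*n) * poly (QB n (A * \<i>) A (b2^2)) (w1^2)"
proof -
  define u where "u = w1^2"
  define t where "t = b2^2"
  define X where "X = (1 + - 1 / t * (1 / A) * \<i>) * (1 + - u * (1 / A) * \<i>) / (1 + (1 / A)\<^sup>2)"
  have t0: "t \<noteq> 0" using b2 by (simp add: t_def)
  have w: "b2^(2*n - 1) = b2 * t^(n - 1)"
  proof -
    have "2*n - 1 = Suc (2*(n - 1))" using n by simp
    then show ?thesis by (simp add: t_def power_mult)
  qed
  have cst: "\<i> / A * (- (\<i> * (1 / A)) / (1 + (1 / A)\<^sup>2)) = 1 / (1 + A*A)"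
    using A0 by (simp add: field_simps power2_eq_square)
  have e1: "1 + (1/A)^2 = (1+A*A)/(A*A)" using A0 by (simp add: field_simps power2_eq_square)
  have e2: "1 + - 1 / t * (1 / A) * \<i> = (A*t - \<i>)/(A*t)" using A0 t0 by (simp add: field_simps)
  have e3: "1 + - u * (1 / A) * \<i> = (A - u*\<i>)/A" using A0 by (simp add: field_simps)
  have e4: "(A*t - \<i>) * (A - u*\<i>) = - ((1 + A*\<i>*t) * (u + A*\<i>))" by (simp add: algebra_simps)
  have "X = (A*t - \<i>) * (A - u*\<i>) / (t * (1+A*A))"
  proof -
    have nz: "A*A \<noteq> 0" "A*t \<noteq> 0" "t * (1+A*A) \<noteq> 0" "1+A*A \<noteq> 0" "A \<noteq> 0" using A0 A1 t0 by auto
    have "X = ((A*t - \<i>)/(A*t)) * ((A - u*\<i>)/A) / ((1+A*A)/(A*A))" unfolding X_def e1 e2 e3 ..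
    also have "\<dots> = (A*t - \<i>) * (A - u*\<i>) * (A*A) / ((A*t) * A * (1+A*A))" by (simp add: nz)
    also have "\<dots> = (A*t - \<i>) * (A - u*\<i>) * (A*A) / ((t * (1+A*A)) * (A*A))"
      by (simp add: mult_ac)
    also have "\<dots> = (A*t - \<i>) * (A - u*\<i>) / (t * (1+A*A))"
      using nz by (rule_tac nonzero_mult_divide_mult_cancel_right) simp
    finally show ?thesis .
  qed
  then have "t * X = (A*t - \<i>) * (A - u*\<i>) / (1+A*A)"
    using t0 by simp
  also have "\<dots> = - ((1 + A*\<i>*t) * (u + A*\<i>)) / (1+A*A)" unfolding e4 ..
  also have "\<dots> = - ((1 + A*\<i>*t)/(1+A*A)) * (u + A*\<i>)" by simp
  finally have tX: "t * X = - ((1 + A*\<i>*t)/(1+A*A)) * (u + A*\<i>)" .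
  have "F10 n w1 w2 b1 b2 A = (- (\<i> * (1 / A)) / (1 + (1 / A)\<^sup>2) * (\<Sum>m<n. X^m)) * w1 * w2^(2*n) * (b2 * t^(n - 1)) * \<i> / A"
    unfolding F10_def Fn_def fpoly_sum w X_def t_def u_def by simp
  also have "\<dots> = w1 * b2 * w2^(2*n) * (\<i> / A * (- (\<i> * (1 / A)) / (1 + (1 / A)\<^sup>2)) * (\<Sum>m<n. t^(n - 1) * X^m))"
    by (simp add: sum_distrib_left mult_ac sum_negf)
  also have "(\<Sum>m<n. t^(n - 1) * X^m) = (\<Sum>m<n. (t * X)^m * t^(n - 1 - m))"
    by (intro sum.cong refl) (rule shift_pow, simp)
  finally have FF: "F10 n w1 w2 b1 b2 A = w1 * b2 * w2 ^ (2 * n) * (\<i> / A * (- (\<i> * (1 / A)) / (1 + (1 / A)\<^sup>2)) * (\<Sum>m<n. (t * X) ^ m * t ^ (n - 1 - m)))" .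
  show ?thesis unfolding FF cst tX poly_QB u_def[symmetric] t_def[symmetric] by (simp add: mult_ac)
qed

lemma F11_eq:
  fixes A :: complex
  assumes n: "n \<ge> 1" and A0: "A \<noteq> 0" and A1: "1 + A*A \<noteq> 0" and w1: "w1 \<noteq> 0" and b2: "b2 \<noteq> 0"
  shows "F11 n w1 w2 b1 b2 A = w1 * b2 * w2^(2*n) * b1^(2*n) * poly (QTR n (A * \<i>) A (b2^2)) (w1^2)"
proof -
  define u where "u = w1^2"
  define t where "t = b2^2"
  define X where "X = (1 + 1 / t * A * \<i>) * (1 + 1 / u * A * \<i>) / (1 + A\<^sup>2)"
  have t0: "t \<noteq> 0" using b2 by (simp add: t_def)
  have u0: "u \<noteq> 0" using w1 by (simp add: u_def)
  have w: "b2^(2*n - 1) = b2 * t^(n - 1)" "w1^(2*n - 1) = w1 * u^(n - 1)"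
  proof -
    have "2*n - 1 = Suc (2*(n - 1))" using n by simp
    then show "b2^(2*n - 1) = b2 * t^(n - 1)" "w1^(2*n - 1) = w1 * u^(n - 1)" by (simp_all add: t_def u_def power_mult)
  qed
  have f1: "1 + 1 / t * A * \<i> = (t + A*\<i>)/t" using t0 by (simp add: field_simps)
  have f2: "1 + 1 / u * A * \<i> = (u + A*\<i>)/u" using u0 by (simp add: field_simps)
  have "(u*t) * X = (u*t) * (((t + A*\<i>)/t) * ((u + A*\<i>)/u) / (1 + A*A))"
    unfolding X_def f1 f2 by (simp add: power2_eq_square)
  also have "\<dots> = (t + A*\<i>)/(1+A*A) * (u + A*\<i>)" using t0 u0 by simp
  finally have utX: "(u*t) * X = (t + A*\<i>)/(1+A*A) * (u + A*\<i>)" .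
  have "F11 n w1 w2 b1 b2 A = (- (\<i> * A) / (1 + A\<^sup>2) * (\<Sum>m<n. X^m)) * (w1 * u^(n - 1)) * w2^(2*n) * b1^(2*n) * (b2 * t^(n - 1))"
    unfolding F11_def Fn_def fpoly_sum w X_def t_def u_def by simp
  also have "\<dots> = w1 * b2 * w2^(2*n) * b1^(2*n) * (- (\<i> * A) / (1 + A\<^sup>2) * (\<Sum>m<n. (u*t)^(n - 1) * X^m))"
    by (simp add: sum_distrib_left mult_ac sum_negf power_mult_distrib sum_divide_distrib)
  also have "(\<Sum>m<n. (u*t)^(n - 1) * X^m) = (\<Sum>m<n. ((u*t) * X)^m * (u*t)^(n - 1 - m))"
    by (intro sum.cong refl) (rule shift_pow, simp)
  finally have FF: "F11 n w1 w2 b1 b2 A = w1 * b2 * w2^(2*n) * b1^(2*n) * (- (\<i> * A) / (1 + A\<^sup>2) * (\<Sum>m<n. ((u*t) * X)^m * (u*t)^(n - 1 - m)))" .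
  show ?thesis unfolding FF utX poly_QTR u_def[symmetric] t_def[symmetric] by (simp add: mult_ac power2_eq_square)
qed

lemma pw2: "(x::complex)^(2*k) = (x^2)^k" by (simp add: power_mult)

lemma genG_expand:
  "gen_G n Kinv w1 w2 b1 b2 = w1 * b2 * (\<Sum>i<n. \<Sum>j\<le>n. \<Sum>k\<le>n. \<Sum>l<n.
      Kinv (wv i j) (bv k l) * ((w1^2)^i * (w2^2)^j * (b1^2)^k * (b2^2)^l))"
proof -
  have e: "nat (fst (wv i j)) = Suc (2*i)" "nat (snd (wv i j)) = 2*j" "nat (fst (bv k l)) = 2*k" "nat (snd (bv k l)) = Suc (2*l)" for i j k l
    by (simp_all add: wv_def bv_def nat_add_distrib nat_mult_distrib)
  show ?thesis unfolding gen_G_def sumW sumB e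
    by (simp only: pw2 power_Suc sum_distrib_left) (simp add: mult_ac)
qed

lemma swap3: "(\<Sum>k\<in>A. \<Sum>l\<in>B. \<Sum>i\<in>C. f k l i) = (\<Sum>i\<in>C. \<Sum>k\<in>A. \<Sum>l\<in>B. f k l i)"
proof -
  have "(\<Sum>k\<in>A. \<Sum>l\<in>B. \<Sum>i\<in>C. f k l i) = (\<Sum>k\<in>A. \<Sum>i\<in>C. \<Sum>l\<in>B. f k l i)"
    by (rule sum.cong[OF refl], rule sum.swap)
  also have "\<dots> = (\<Sum>i\<in>C. \<Sum>k\<in>A. \<Sum>l\<in>B. f k l i)" by (rule sum.swap)
  finally show ?thesis .
qed

lemma main_id:
  assumes inv: "is_kast_inverse n a Kinv" and n: "n \<ge> 1"
  defines "\<alpha> \<equiv> complex_of_real a * \<i>"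
  shows "(1 + u*v + \<alpha>*(u+v)) * (1 + s*t + \<alpha>*(s+t)) *
     (\<Sum>i<n. \<Sum>j\<le>n. \<Sum>k\<le>n. \<Sum>l<n. Kinv (wv i j) (bv k l) * (u^i * v^j * s^k * t^l))
   = (1 + s*t + \<alpha>*(s+t)) * (v * (\<Sum>k\<le>n. (u*s)^k) * (\<Sum>l<n. (v*t)^l))
     + (1 + \<alpha>*u) * (s * (\<Sum>i<n. (u*s)^i) + (1 + \<alpha>*t) * poly (cP n Kinv t 0 0) u
          + s^(n+1) * (t + \<alpha>) * poly (cP n Kinv t 0 n) u)
     + v^(n+1) * (u + \<alpha>) * (s * t^n * (\<Sum>i<n. (u*s)^i) + (1 + \<alpha>*t) * poly (cP n Kinv t n 0) u
          + s^(n+1) * (t + \<alpha>) * poly (cP n Kinv t n n) u)"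
proof -
  define Cw where "Cw = 1 + u*v + \<alpha>*(u+v)"
  define Cb where "Cb = 1 + s*t + \<alpha>*(s+t)"
  define K where "K i j k l = Kinv (wv i j) (bv k l)" for i j k l
  define g where "g k l = (\<Sum>i<n. \<Sum>j\<le>n. K i j k l * (u^i * v^j))" for k l
  define h where "h i j = (\<Sum>k\<le>n. \<Sum>l<n. K i j k l * (s^k * t^l))" for i j
  define Ab where "Ab k l = (\<Sum>i<n. K i 0 k l * u^i)" for k l
  define At where "At k l = (\<Sum>i<n. K i n k l * u^i)" for k l
  define Hb where "Hb = (\<Sum>i<n. u^i * h i 0)"
  define Ht where "Ht = (\<Sum>i<n. u^i * h i n)"
  define S1 where "S1 = v * (\<Sum>k\<le>n. (u*s)^k) * (\<Sum>l<n. (v*t)^l)"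
  define P where "P j k = poly (cP n Kinv t j k) u" for j k
  have Wr: "Cw * g k l = u^k * v^(l+1) + (1 + \<alpha>*u) * Ab k l + v^(n+1) * (u + \<alpha>) * At k l"
    if "k \<le> n" "l < n" for k l
    using W_rel[OF inv n that, of u v] unfolding Cw_def g_def Ab_def At_def K_def \<alpha>_def .
  have Br: "Cb * h i j = s^(i+1) * t^j + (1 + \<alpha>*t) * (\<Sum>l<n. K i j 0 l * t^l) + s^(n+1) * (t + \<alpha>) * (\<Sum>l<n. K i j n l * t^l)"
    if "i < n" "j \<le> n" for i j
    using B_rel[OF inv n that, of s t] unfolding Cb_def h_def K_def \<alpha>_def .
  have G1: "(\<Sum>i<n. \<Sum>j\<le>n. \<Sum>k\<le>n. \<Sum>l<n. K i j k l * (u^i * v^j * s^k * t^l)) = (\<Sum>k\<le>n. \<Sum>l<n. s^k * t^l * g k l)"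
  proof -
    have "(\<Sum>i<n. \<Sum>j\<le>n. \<Sum>k\<le>n. \<Sum>l<n. K i j k l * (u^i * v^j * s^k * t^l)) = (\<Sum>k\<le>n. \<Sum>l<n. \<Sum>i<n. \<Sum>j\<le>n. K i j k l * (u^i * v^j * s^k * t^l))"
      by (rule swap4[symmetric])
    also have "\<dots> = (\<Sum>k\<le>n. \<Sum>l<n. s^k * t^l * g k l)"
      unfolding g_def by (simp add: sum_distrib_left mult_ac)
    finally show ?thesis .
  qed
  have G2: "Cw * (\<Sum>k\<le>n. \<Sum>l<n. s^k * t^l * g k l) = S1 + (1 + \<alpha>*u) * Hb + v^(n+1) * (u + \<alpha>) * Ht"
  proof -
    have "Cw * (\<Sum>k\<le>n. \<Sum>l<n. s^k * t^l * g k l) = (\<Sum>k\<le>n. \<Sum>l<n. s^k * t^l * (Cw * g k l))"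
      by (simp add: sum_distrib_left mult_ac)
    also have "\<dots> = (\<Sum>k\<le>n. \<Sum>l<n. s^k * t^l * (u^k * v^(l+1)) + (1 + \<alpha>*u) * (s^k * t^l * Ab k l) + v^(n+1) * (u + \<alpha>) * (s^k * t^l * At k l))"
      by (intro sum.cong refl) (simp add: Wr algebra_simps)
    also have "\<dots> = (\<Sum>k\<le>n. \<Sum>l<n. s^k * t^l * (u^k * v^(l+1))) + (1 + \<alpha>*u) * (\<Sum>k\<le>n. \<Sum>l<n. s^k * t^l * Ab k l)
        + v^(n+1) * (u + \<alpha>) * (\<Sum>k\<le>n. \<Sum>l<n. s^k * t^l * At k l)"
      by (simp add: sum.distrib sum_distrib_left)
    also have "(\<Sum>k\<le>n. \<Sum>l<n. s^k * t^l * (u^k * v^(l+1))) = S1"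
      unfolding S1_def by (simp add: sum_distrib_left sum_distrib_right power_mult_distrib mult_ac)
    also have "(\<Sum>k\<le>n. \<Sum>l<n. s^k * t^l * Ab k l) = Hb"
    proof -
      have "(\<Sum>k\<le>n. \<Sum>l<n. s^k * t^l * Ab k l) = (\<Sum>k\<le>n. \<Sum>l<n. \<Sum>i<n. u^i * (K i 0 k l * (s^k * t^l)))"
        unfolding Ab_def by (simp add: sum_distrib_left mult_ac)
      also have "\<dots> = Hb" unfolding Hb_def h_def by (subst swap3) (simp add: sum_distrib_left)
      finally show ?thesis .
    qed
    also have "(\<Sum>k\<le>n. \<Sum>l<n. s^k * t^l * At k l) = Ht"
    proof -
      have "(\<Sum>k\<le>n. \<Sum>l<n. s^k * t^l * At k l) = (\<Sum>k\<le>n. \<Sum>l<n. \<Sum>i<n. u^i * (K i n k l * (s^k * t^l)))"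
        unfolding At_def by (simp add: sum_distrib_left mult_ac)
      also have "\<dots> = Ht" unfolding Ht_def h_def by (subst swap3) (simp add: sum_distrib_left)
      finally show ?thesis .
    qed
    finally show ?thesis .
  qed
  have PP: "P j k = (\<Sum>i<n. u^i * (\<Sum>l<n. K i j k l * t^l))" for j k
    unfolding P_def poly_cP K_def by (simp add: mult_ac)
  have H1: "Cb * Hb = s * (\<Sum>i<n. (u*s)^i) + (1 + \<alpha>*t) * P 0 0 + s^(n+1) * (t + \<alpha>) * P 0 n"
  proof -
    have "Cb * Hb = (\<Sum>i<n. u^i * (Cb * h i 0))" unfolding Hb_def by (simp add: sum_distrib_left mult_ac)
    also have "\<dots> = (\<Sum>i<n. s * (u*s)^i + (1 + \<alpha>*t) * (u^i * (\<Sum>l<n. K i 0 0 l * t^l)) + s^(n+1) * (t + \<alpha>) * (u^i * (\<Sum>l<n. K i 0 n l * t^l)))"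
      by (intro sum.cong refl) (simp add: Br power_mult_distrib algebra_simps)
    also have "\<dots> = s * (\<Sum>i<n. (u*s)^i) + (1 + \<alpha>*t) * P 0 0 + s^(n+1) * (t + \<alpha>) * P 0 n"
      unfolding PP by (simp add: sum.distrib sum_distrib_left)
    finally show ?thesis .
  qed
  have H2: "Cb * Ht = s * t^n * (\<Sum>i<n. (u*s)^i) + (1 + \<alpha>*t) * P n 0 + s^(n+1) * (t + \<alpha>) * P n n"
  proof -
    have "Cb * Ht = (\<Sum>i<n. u^i * (Cb * h i n))" unfolding Ht_def by (simp add: sum_distrib_left mult_ac)
    also have "\<dots> = (\<Sum>i<n. s * t^n * (u*s)^i + (1 + \<alpha>*t) * (u^i * (\<Sum>l<n. K i n 0 l * t^l)) + s^(n+1) * (t + \<alpha>) * (u^i * (\<Sum>l<n. K i n n l * t^l)))"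
      by (intro sum.cong refl) (simp add: Br power_mult_distrib algebra_simps)
    also have "\<dots> = s * t^n * (\<Sum>i<n. (u*s)^i) + (1 + \<alpha>*t) * P n 0 + s^(n+1) * (t + \<alpha>) * P n n"
      unfolding PP by (simp add: sum.distrib sum_distrib_left)
    finally show ?thesis .
  qed
  have "Cw * Cb * (\<Sum>i<n. \<Sum>j\<le>n. \<Sum>k\<le>n. \<Sum>l<n. K i j k l * (u^i * v^j * s^k * t^l))
      = Cb * (S1 + (1 + \<alpha>*u) * Hb + v^(n+1) * (u + \<alpha>) * Ht)"
    unfolding G1 G2[symmetric] by (simp add: mult_ac)
  also have "\<dots> = Cb * S1 + (1 + \<alpha>*u) * (Cb * Hb) + v^(n+1) * (u + \<alpha>) * (Cb * Ht)"
    by (simp add: algebra_simps)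
  also have "\<dots> = Cb * S1 + (1 + \<alpha>*u) * (s * (\<Sum>i<n. (u*s)^i) + (1 + \<alpha>*t) * P 0 0 + s^(n+1) * (t + \<alpha>) * P 0 n)
     + v^(n+1) * (u + \<alpha>) * (s * t^n * (\<Sum>i<n. (u*s)^i) + (1 + \<alpha>*t) * P n 0 + s^(n+1) * (t + \<alpha>) * P n n)"
    by (simp only: H1 H2)
  finally show ?thesis unfolding Cw_def Cb_def S1_def P_def K_def .
qed

lemma corners:
  assumes inv: "is_kast_inverse n a Kinv" and n: "n \<ge> 1" and a: "a > 0"
  shows "cP n Kinv t 0 0 = QA n (complex_of_real a * \<i>) (complex_of_real a) t
       \<and> cP n Kinv t n 0 = QB n (complex_of_real a * \<i>) (complex_of_real a) t
       \<and> cP n Kinv t 0 n = QBR n (complex_of_real a * \<i>) (complex_of_real a) t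
       \<and> cP n Kinv t n n = QTR n (complex_of_real a * \<i>) (complex_of_real a) t"
proof -
  define A where "A = complex_of_real a"
  have aA: "(A * \<i>) * (A * \<i>) = - (A*A)" by (simp add: algebra_simps)
  have AA: "A * A = complex_of_real (a*a)" by (simp add: A_def)
  have A1: "1 + A*A \<noteq> 0"
  proof
    assume "1 + A*A = 0"
    then have "complex_of_real (1 + a*a) = 0" unfolding AA by simp
    then have "1 + a*a = 0" by (simp only: of_real_eq_0_iff)
    moreover have "1 + a*a > 0" by (simp add: add_pos_nonneg)
    ultimately show False by simp
  qed
  have a0: "A * \<i> \<noteq> 0" using a by (simp add: A_def)
  have a1: "(A * \<i>) * (A * \<i>) \<noteq> 1"
  proof
    assume "(A * \<i>) * (A * \<i>) = 1"
    then have "- (A*A) = 1" unfolding aA .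
    then have "A*A = - 1" by (simp add: minus_equation_iff)
    then have "1 + A*A = 0" by simp
    with A1 show False by simp
  qed
  have c0: "(-1::complex)^n \<noteq> 0" by simp
  have r0: "cP n Kinv t 0 0 = QA n (A*\<i>) A t \<and> cP n Kinv t n 0 = QB n (A*\<i>) A t"
    by (rule kuniq2[OF corner_id[OF inv n, of 0, folded A_def] candA[OF aA A1] deg_cP[OF n] deg_QA[OF n] a0 a1 c0]) simp
  have rn: "cP n Kinv t 0 n = QBR n (A*\<i>) A t \<and> cP n Kinv t n n = QTR n (A*\<i>) A t"
    by (rule kuniq2[OF corner_id[OF inv n, of n, folded A_def] candB[OF aA A1] deg_cP[OF n] deg_QBR[OF n] a0 a1 c0]) simp
  show ?thesis using r0 rn unfolding A_def by simp
qed

theorem theorem2: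
  fixes n :: nat and a :: real and Kinv :: "int \<times> int \<Rightarrow> int \<times> int \<Rightarrow> complex"
    and w1 w2 b1 b2 :: complex
  assumes "n \<ge> 1" and "a > 0"
    and "is_kast_inverse n a Kinv"
    and "w1 \<noteq> 0" and "b2 \<noteq> 0"
    and "Cden (complex_of_real a) w1 w2 \<noteq> 0" and "Cden (complex_of_real a) b1 b2 \<noteq> 0"
  shows "gen_G n Kinv w1 w2 b1 b2 =
      (let A = complex_of_real a;
           Cw = Cden A w1 w2; Cb = Cden A b1 b2;
           f00 = F00 n w1 w2 b1 b2 A; f01 = F01 n w1 w2 b1 b2 A;
           f10 = F10 n w1 w2 b1 b2 A; f11 = F11 n w1 w2 b1 b2 A
       in w1 * w2\<^sup>2 * b2 * fpoly (n + 1) (w1\<^sup>2 * b1\<^sup>2) * fpoly n (w2\<^sup>2 * b2\<^sup>2) / Cw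
        + (1 + \<i> * A * w1\<^sup>2) *
            ((1 + \<i> * A * b2\<^sup>2) * f00
              + b1\<^sup>2 * (b2 * w1 * fpoly n (b1\<^sup>2 * w1\<^sup>2) + (\<i> * A + b2\<^sup>2) * f01))
            / (Cw * Cb)
        + (\<i> * A + w1\<^sup>2) * w2\<^sup>2 *
            (b1\<^sup>2 * b2 ^ (2 * n + 1) * w1 * w2 ^ (2 * n) * fpoly n (b1\<^sup>2 * w1\<^sup>2)
              + (1 + \<i> * A * b2\<^sup>2) * f10 + b1\<^sup>2 * (\<i> * A + b2\<^sup>2) * f11)
            / (Cw * Cb))"
proof -
  define A where "A = complex_of_real a"
  define u where "u = w1^2"
  define v where "v = w2^2"
  define s where "s = b1^2"
  define t where "t = b2^2"
  define \<alpha> where "\<alpha> = complex_of_real a * \<i>"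
  define Gs where "Gs = (\<Sum>i<n. \<Sum>j\<le>n. \<Sum>k\<le>n. \<Sum>l<n. Kinv (wv i j) (bv k l) * (u^i * v^j * s^k * t^l))"
  define Cw where "Cw = 1 + u*v + \<alpha>*(u+v)"
  define Cb where "Cb = 1 + s*t + \<alpha>*(s+t)"
  define S1 where "S1 = (\<Sum>i<n. (u*s)^i)"
  define SK where "SK = (\<Sum>k\<le>n. (u*s)^k)"
  define SL where "SL = (\<Sum>l<n. (v*t)^l)"
  define qa where "qa = poly (QA n \<alpha> A t) u"
  define qb where "qb = poly (QB n \<alpha> A t) u"
  define qbr where "qbr = poly (QBR n \<alpha> A t) u"
  define qtr where "qtr = poly (QTR n \<alpha> A t) u"
  have n: "n \<ge> 1" and a: "a > 0" and inv: "is_kast_inverse n a Kinv" using assms by auto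
  have \<alpha>A: "\<alpha> = A * \<i>" by (simp add: \<alpha>_def A_def)
  have A0: "A \<noteq> 0" using a by (simp add: A_def)
  have A1: "1 + A*A \<noteq> 0"
  proof
    assume "1 + A*A = 0"
    then have "complex_of_real (1 + a*a) = 0" by (simp add: A_def)
    then have "1 + a*a = 0" by (simp only: of_real_eq_0_iff)
    moreover have "1 + a*a > 0" by (simp add: add_pos_nonneg)
    ultimately show False by simp
  qed
  have Cw0: "Cw \<noteq> 0" and Cb0: "Cb \<noteq> 0"
    using assms(6,7) by (simp_all add: Cden_def Cw_def Cb_def u_def v_def s_def t_def \<alpha>_def mult_ac)
  have CwE: "Cden A w1 w2 = Cw" and CbE: "Cden A b1 b2 = Cb"
    by (simp_all add: Cden_def Cw_def Cb_def u_def v_def s_def t_def \<alpha>_def A_def mult_ac)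
  have GG: "gen_G n Kinv w1 w2 b1 b2 = w1 * b2 * Gs"
    unfolding genG_expand Gs_def u_def v_def s_def t_def ..
  have cor: "poly (cP n Kinv t 0 0) u = qa" "poly (cP n Kinv t n 0) u = qb"
      "poly (cP n Kinv t 0 n) u = qbr" "poly (cP n Kinv t n n) u = qtr"
    using corners[OF inv n a, of t] unfolding qa_def qb_def qbr_def qtr_def \<alpha>_def A_def by simp_all
  have M: "Cw * Cb * Gs = Cb * (v * SK * SL)
     + (1 + \<alpha>*u) * (s * S1 + (1 + \<alpha>*t) * qa + s^(n+1) * (t + \<alpha>) * qbr)
     + v^(n+1) * (u + \<alpha>) * (s * t^n * S1 + (1 + \<alpha>*t) * qb + s^(n+1) * (t + \<alpha>) * qtr)"
    using main_id[OF inv n, of u v s t] unfolding Cw_def Cb_def Gs_def SK_def SL_def S1_def \<alpha>_def cor .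
  have f00: "F00 n w1 w2 b1 b2 A = w1 * b2 * qa" unfolding F00_eq qa_def \<alpha>A t_def u_def ..
  have f01: "F01 n w1 w2 b1 b2 A = w1 * b2 * s^n * qbr"
    unfolding F01_eq[OF n A0 A1 assms(4)] qbr_def \<alpha>A t_def u_def s_def by (simp add: power_mult)
  have f10: "F10 n w1 w2 b1 b2 A = w1 * b2 * v^n * qb"
    unfolding F10_eq[OF n A0 A1 assms(5)] qb_def \<alpha>A t_def u_def v_def by (simp add: power_mult)
  have f11: "F11 n w1 w2 b1 b2 A = w1 * b2 * v^n * s^n * qtr"
    unfolding F11_eq[OF n A0 A1 assms(4,5)] qtr_def \<alpha>A t_def u_def v_def s_def by (simp add: power_mult)
  have fp1: "fpoly (n + 1) (u * s) = SK" unfolding fpoly_sum SK_def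
    by (simp add: lessThan_Suc_atMost[symmetric])
  have fp2: "fpoly n (v * t) = SL" unfolding fpoly_sum SL_def ..
  have fp3: "fpoly n (s * u) = S1" unfolding fpoly_sum S1_def by (simp add: mult.commute)
  have pw: "b2 ^ (2 * n + 1) = b2 * t^n" "w2 ^ (2 * n) = v^n" by (simp_all add: t_def v_def power_mult)
  have sq: "w1\<^sup>2 = u" "w2\<^sup>2 = v" "b1\<^sup>2 = s" "b2\<^sup>2 = t" by (simp_all add: u_def v_def s_def t_def)
  have Gs: "Gs = (Cb * (v * SK * SL)
     + (1 + \<alpha>*u) * (s * S1 + (1 + \<alpha>*t) * qa + s^(n+1) * (t + \<alpha>) * qbr)
     + v^(n+1) * (u + \<alpha>) * (s * t^n * S1 + (1 + \<alpha>*t) * qb + s^(n+1) * (t + \<alpha>) * qtr)) / (Cw * Cb)"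
    using M Cw0 Cb0 by (simp add: field_simps)
  show ?thesis
    unfolding Let_def GG A_def[symmetric] CwE CbE f00 f01 f10 f11 pw sq fp1 fp2 fp3 \<alpha>A[symmetric] Gs
    using Cw0 Cb0 apply (simp add: divide_simps)
    apply (simp add: \<alpha>A algebra_simps)
    done
qed

end
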